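(* For every $\gamma\in[0,1]$, the Hybrid Ranking algorithm with threshold $\gamma$ (described in the context) is $\frac{\gamma}{2}$-CEF: on every instance, its (random) output matching $X$ satisfies $\mathbb{E}[V_i(X)]\ge\frac{\gamma}{2}\,\mathbb{E}[V_i^*(y_j(X))]$ for all classes $i,j$.
   Context: Online class matching (indivisible setting): an instance is a bipartite graph $G=(N,M,E)$ with known agents $N$, items $M$, $E\subseteq M\times N$ ($a$ likes $o$ iff $(o,a)\in E$); agents are partitioned into $k$ known classes $N_1,\dots,N_k$. Items arrive one at a time in adversarial order; upon arrival of $o$ its set of liking agents is revealed and $o$ must be irrevocably matched to at most one currently unmatched agent liking it, producing an integral matching $X=(x_{o,a})\in\{0,1\}^{M\times N}$. $V_i(X)=\sum_{a\in N_i}\sum_ox_{o,a}$; $y_j(X)\in\{0,1\}^M$ is the indicator vector of the set of items matched to agents in class $j$. For $y\in[0,1]^M$, $V_i^*(y)$ is the maximum size of a fractional matching using edges of $E$ between $N_i$ and $M$ with degree at most $y_o$ at each item $o$ and at most $1$ at each agent. Hybrid Ranking with threshold $\gamma$: fix an arbitrary ordering of $N$. For each agent $a$ independently sample $\mu_a$ uniformly from $[0,1]$, and let $N'=\{a:\mu_a\le\gamma\}$. On arrival of item $o$: (1) if $o$ is liked by some unmatched agent in $N'$, let $Z$ be the set of classes containing such agents; choose a class $i$ uniformly at random from $Z$ and match $o$ to the unmatched agent of class $i$ in $N'$ liking $o$ that occurs first in the ordering of $N$; (2) otherwise, if $o$ is liked by some unmatched agent in $N\setminus N'$, match $o$ to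 such an agent with the lowest value $\mu_a$; otherwise leave $o$ unmatched. *)

theory Defs
  imports "HOL-Probability.Probability"
begin

text \<open>
  An instance consists of a finite
  agent set N, a finite item set M and edges E (a subset of M x N); the pair (itm, a)
  is in E iff agent a likes item itm. Classes are given by a map cls from agents to
  class indices; class c is the set of agents a in N with cls a = c.
  The fixed arbitrary ordering of N is given by an injective map rk (smaller rk
  means earlier). The adversarial arrival order is a list of the items of M.
\<close>

definition unmatched :: "('i \<times> 'a) set \<Rightarrow> 'a \<Rightarrow> bool" where
  "unmatched X a \<longleftrightarrow> a \<notin> snd ` X"

text \<open>One step of Hybrid Ranking on arrival of item itm, given the sampled values mu
  (the class choice is the only remaining randomness, hence the pmf).\<close>
definition hr_step ::
  "real \<Rightarrow> ('i \<times> 'a) set \<Rightarrow> 'a set \<Rightarrow> ('a \<Rightarrow> nat) \<Rightarrow> ('a \<Rightarrow> nat) \<Rightarrow> ('a \<Rightarrow> real)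
     \<Rightarrow> 'i \<Rightarrow> ('i \<times> 'a) set \<Rightarrow> ('i \<times> 'a) set pmf" where
  "hr_step \<gamma> E N cls rk mu itm X =
    (let C1 = {a \<in> N. mu a \<le> \<gamma> \<and> (itm, a) \<in> E \<and> unmatched X a};
         C2 = {a \<in> N. \<not> mu a \<le> \<gamma> \<and> (itm, a) \<in> E \<and> unmatched X a}
     in if C1 \<noteq> {} then
          map_pmf (\<lambda>c. insert (itm, SOME a. a \<in> C1 \<and> cls a = c \<and>
                                   (\<forall>b \<in> C1. cls b = c \<longrightarrow> rk a \<le> rk b)) X)
                  (pmf_of_set (cls ` C1))
        else if C2 \<noteq> {} then
          return_pmf (insert (itm, SOME a. a \<in> C2 \<and> (\<forall>b \<in> C2. mu a \<le> mu b)) X)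
        else return_pmf X)"

definition hybrid_ranking ::
  "real \<Rightarrow> ('i \<times> 'a) set \<Rightarrow> 'a set \<Rightarrow> ('a \<Rightarrow> nat) \<Rightarrow> ('a \<Rightarrow> nat) \<Rightarrow> ('a \<Rightarrow> real)
     \<Rightarrow> 'i list \<Rightarrow> ('i \<times> 'a) set pmf" where
  "hybrid_ranking \<gamma> E N cls rk mu items =
     foldl (\<lambda>p itm. bind_pmf p (hr_step \<gamma> E N cls rk mu itm)) (return_pmf {}) items"

definition mu_dist :: "'a set \<Rightarrow> ('a \<Rightarrow> real) measure" where
  "mu_dist N = PiM N (\<lambda>_. uniform_measure lborel {0..1})"

definition hr_expect ::
  "real \<Rightarrow> ('i \<times> 'a) set \<Rightarrow> 'a set \<Rightarrow> ('a \<Rightarrow> nat) \<Rightarrow> ('a \<Rightarrow> nat) \<Rightarrow> 'i list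
     \<Rightarrow> (('i \<times> 'a) set \<Rightarrow> real) \<Rightarrow> real" where
  "hr_expect \<gamma> E N cls rk items f =
     (\<integral>mu. measure_pmf.expectation (hybrid_ranking \<gamma> E N cls rk mu items) f \<partial>mu_dist N)"

definition class_value :: "'a set \<Rightarrow> ('a \<Rightarrow> nat) \<Rightarrow> nat \<Rightarrow> ('i \<times> 'a) set \<Rightarrow> real" where
  "class_value N cls i X = real (card {p \<in> X. snd p \<in> N \<and> cls (snd p) = i})"

definition class_items :: "'a set \<Rightarrow> ('a \<Rightarrow> nat) \<Rightarrow> nat \<Rightarrow> ('i \<times> 'a) set \<Rightarrow> 'i \<Rightarrow> real" where
  "class_items N cls j X = (\<lambda>itm. if \<exists>a \<in> N. cls a = j \<and> (itm, a) \<in> X then 1 else 0)"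

definition frac_value ::
  "'i set \<Rightarrow> 'a set \<Rightarrow> ('i \<times> 'a) set \<Rightarrow> ('a \<Rightarrow> nat) \<Rightarrow> nat \<Rightarrow> ('i \<Rightarrow> real) \<Rightarrow> real" where
  "frac_value M N E cls i y =
     Sup {(\<Sum>e \<in> {e \<in> E. snd e \<in> N \<and> cls (snd e) = i}. x e) | x :: 'i \<times> 'a \<Rightarrow> real.
            (\<forall>e. 0 \<le> x e) \<and>
            (\<forall>itm \<in> M. (\<Sum>a \<in> {a \<in> N. cls a = i \<and> (itm, a) \<in> E}. x (itm, a)) \<le> y itm) \<and>
            (\<forall>a \<in> N. cls a = i \<longrightarrow> (\<Sum>itm \<in> {itm \<in> M. (itm, a) \<in> E}. x (itm, a)) \<le> 1)}"

end

theory Submission imports Defs begin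

definition C1 :: "real \<Rightarrow> ('i \<times> 'a) set \<Rightarrow> 'a set \<Rightarrow> ('a \<Rightarrow> real) \<Rightarrow> 'i \<Rightarrow> ('i \<times> 'a) set \<Rightarrow> 'a set" where
  "C1 \<gamma> E N mu itm X = {a \<in> N. mu a \<le> \<gamma> \<and> (itm, a) \<in> E \<and> unmatched X a}"
definition C2 :: "real \<Rightarrow> ('i \<times> 'a) set \<Rightarrow> 'a set \<Rightarrow> ('a \<Rightarrow> real) \<Rightarrow> 'i \<Rightarrow> ('i \<times> 'a) set \<Rightarrow> 'a set" where
  "C2 \<gamma> E N mu itm X = {a \<in> N. \<not> mu a \<le> \<gamma> \<and> (itm, a) \<in> E \<and> unmatched X a}"
definition pk1 where
  "pk1 (C :: 'a set) (cls :: 'a \<Rightarrow> nat) (rk :: 'a \<Rightarrow> nat) c = (SOME a. a \<in> C \<and> cls a = c \<and> (\<forall>b \<in> C. cls b = c \<longrightarrow> rk a \<le> rk b))"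
definition pk2 where
  "pk2 (C :: 'a set) (mu :: 'a \<Rightarrow> real) = (SOME a. a \<in> C \<and> (\<forall>b \<in> C. mu a \<le> mu b))"

lemma hr_step_alt:
  "hr_step \<gamma> E N cls rk mu itm X =
    (if C1 \<gamma> E N mu itm X \<noteq> {} then
       map_pmf (\<lambda>c. insert (itm, pk1 (C1 \<gamma> E N mu itm X) cls rk c) X) (pmf_of_set (cls ` C1 \<gamma> E N mu itm X))
     else if C2 \<gamma> E N mu itm X \<noteq> {} then return_pmf (insert (itm, pk2 (C2 \<gamma> E N mu itm X) mu) X)
     else return_pmf X)"
  unfolding hr_step_def C1_def C2_def pk1_def pk2_def Let_def by simp

lemma pk1_prop:
  assumes "finite C" "c \<in> cls ` C"
  shows "pk1 C cls rk c \<in> C \<and> cls (pk1 C cls rk c) = c \<and> (\<forall>b \<in> C. cls b = c \<longrightarrow> rk (pk1 C cls rk c) \<le> rk b)"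
proof -
  let ?D = "{a \<in> C. cls a = c}"
  have "finite ?D" "?D \<noteq> {}" using assms by auto
  then obtain a where "a \<in> ?D" "\<forall>b \<in> ?D. rk a \<le> rk b"
    using ex_min_if_finite[of "rk ` ?D"] by (metis (no_types, lifting) arg_min_if_finite(1) arg_min_least)
  then have "\<exists>a. a \<in> C \<and> cls a = c \<and> (\<forall>b \<in> C. cls b = c \<longrightarrow> rk a \<le> rk b)" by auto
  then show ?thesis unfolding pk1_def by (rule someI_ex)
qed

lemma pk2_prop:
  assumes "finite C" "C \<noteq> {}"
  shows "pk2 C mu \<in> C \<and> (\<forall>b \<in> C. mu (pk2 C mu) \<le> mu b)"
proof -
  obtain a where "a \<in> C" "\<forall>b \<in> C. mu a \<le> mu b"
    using assms by (metis arg_min_if_finite(1) arg_min_least)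
  then have "\<exists>a. a \<in> C \<and> (\<forall>b \<in> C. mu a \<le> mu b)" by auto
  then show ?thesis unfolding pk2_def by (rule someI_ex)
qed


definition trig :: "real \<Rightarrow> ('i \<times> 'a) set \<Rightarrow> 'a set \<Rightarrow> ('a \<Rightarrow> nat) \<Rightarrow> ('a \<Rightarrow> real) \<Rightarrow> nat \<Rightarrow> 'i \<Rightarrow> ('i \<times> 'a) set \<Rightarrow> bool" where
  "trig \<gamma> E N cls mu i itm X \<longleftrightarrow> i \<in> cls ` C1 \<gamma> E N mu itm X"

definition upd where
  "upd \<gamma> E N cls mu i itm S X' =
     (X', if trig \<gamma> E N cls mu i itm (fst S) then insert itm (fst (snd S)) else fst (snd S),
          if trig \<gamma> E N cls mu i itm (fst S) then snd (snd S) else insert itm (snd (snd S)))"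

definition astep where
  "astep \<gamma> E N cls rk mu i itm S = map_pmf (upd \<gamma> E N cls mu i itm S) (hr_step \<gamma> E N cls rk mu itm (fst S))"

fun arun :: "real \<Rightarrow> ('i \<times> 'a) set \<Rightarrow> 'a set \<Rightarrow> ('a \<Rightarrow> nat) \<Rightarrow> ('a \<Rightarrow> nat) \<Rightarrow> ('a \<Rightarrow> real) \<Rightarrow> nat
   \<Rightarrow> ('i \<times> 'a) set \<times> 'i set \<times> 'i set \<Rightarrow> 'i list \<Rightarrow> (('i \<times> 'a) set \<times> 'i set \<times> 'i set) pmf" where
  "arun \<gamma> E N cls rk mu i S [] = return_pmf S"
| "arun \<gamma> E N cls rk mu i S (itm # os) = bind_pmf (astep \<gamma> E N cls rk mu i itm S) (\<lambda>S'. arun \<gamma> E N cls rk mu i S' os)"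

fun xrun :: "real \<Rightarrow> ('i \<times> 'a) set \<Rightarrow> 'a set \<Rightarrow> ('a \<Rightarrow> nat) \<Rightarrow> ('a \<Rightarrow> nat) \<Rightarrow> ('a \<Rightarrow> real)
   \<Rightarrow> ('i \<times> 'a) set \<Rightarrow> 'i list \<Rightarrow> ('i \<times> 'a) set pmf" where
  "xrun \<gamma> E N cls rk mu X [] = return_pmf X"
| "xrun \<gamma> E N cls rk mu X (itm # os) = bind_pmf (hr_step \<gamma> E N cls rk mu itm X) (\<lambda>X'. xrun \<gamma> E N cls rk mu X' os)"

lemma foldl_xrun:
  "foldl (\<lambda>p itm. bind_pmf p (hr_step \<gamma> E N cls rk mu itm)) p os = bind_pmf p (\<lambda>X. xrun \<gamma> E N cls rk mu X os)"
proof (induction os arbitrary: p)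
  case Nil then show ?case by (simp add: bind_return_pmf')
next
  case (Cons a os) then show ?case by (simp add: bind_assoc_pmf)
qed

lemma hybrid_xrun: "hybrid_ranking \<gamma> E N cls rk mu items = xrun \<gamma> E N cls rk mu {} items"
  unfolding hybrid_ranking_def foldl_xrun by (simp add: bind_return_pmf)

lemma fst_upd[simp]: "fst (upd \<gamma> E N cls mu i itm S X') = X'"
  by (simp add: upd_def)

lemma map_fst_arun: "map_pmf fst (arun \<gamma> E N cls rk mu i S os) = xrun \<gamma> E N cls rk mu (fst S) os"
proof (induction os arbitrary: S)
  case Nil then show ?case by simp
next
  case (Cons itm os)
  have "map_pmf fst (arun \<gamma> E N cls rk mu i S (itm # os))
     = bind_pmf (astep \<gamma> E N cls rk mu i itm S) (\<lambda>S'. xrun \<gamma> E N cls rk mu (fst S') os)"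
    by (simp add: map_bind_pmf Cons)
  also have "\<dots> = xrun \<gamma> E N cls rk mu (fst S) (itm # os)"
    by (simp add: astep_def bind_map_pmf)
  finally show ?case .
qed

lemma finite_C1: "finite N \<Longrightarrow> finite (C1 \<gamma> E N mu itm X)" by (simp add: C1_def)
lemma finite_C2: "finite N \<Longrightarrow> finite (C2 \<gamma> E N mu itm X)" by (simp add: C2_def)

lemma finite_hr_step: "finite N \<Longrightarrow> finite (set_pmf (hr_step \<gamma> E N cls rk mu itm X))"
  by (auto simp: hr_step_alt finite_C1)

lemma finite_astep: "finite N \<Longrightarrow> finite (set_pmf (astep \<gamma> E N cls rk mu i itm S))"
  by (simp add: astep_def finite_hr_step)

lemma finite_arun: "finite N \<Longrightarrow> finite (set_pmf (arun \<gamma> E N cls rk mu i S os))"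
proof (induction os arbitrary: S)
  case Nil then show ?case by simp
next
  case (Cons itm os) then show ?case by (simp add: finite_astep)
qed

lemma finite_xrun: "finite N \<Longrightarrow> finite (set_pmf (xrun \<gamma> E N cls rk mu X os))"
  by (metis map_fst_arun finite_arun set_map_pmf finite_imageI fst_conv)

lemma exp_bind_fin:
  fixes h :: "'b \<Rightarrow> real"
  assumes "finite (set_pmf p)" "\<And>x. x \<in> set_pmf p \<Longrightarrow> finite (set_pmf (f x))"
  shows "measure_pmf.expectation (bind_pmf p f) h = measure_pmf.expectation p (\<lambda>x. measure_pmf.expectation (f x) h)"
  using assms by (simp add: pmf_expectation_bind[of "set_pmf p"] integral_measure_pmf_real[of "set_pmf p"] mult.commute)


lemma exp_hr_step:
  fixes h :: "('i \<times> 'a) set \<Rightarrow> real"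
  assumes "finite N"
  shows "measure_pmf.expectation (hr_step \<gamma> E N cls rk mu itm X) h =
    (if C1 \<gamma> E N mu itm X \<noteq> {} then
       (\<Sum>c \<in> cls ` C1 \<gamma> E N mu itm X. h (insert (itm, pk1 (C1 \<gamma> E N mu itm X) cls rk c) X)) / card (cls ` C1 \<gamma> E N mu itm X)
     else if C2 \<gamma> E N mu itm X \<noteq> {} then h (insert (itm, pk2 (C2 \<gamma> E N mu itm X) mu) X)
     else h X)"
  using assms by (simp add: hr_step_alt integral_pmf_of_set finite_C1)

lemma exp_astep:
  fixes h :: "('i \<times> 'a) set \<times> 'i set \<times> 'i set \<Rightarrow> real"
  shows "measure_pmf.expectation (astep \<gamma> E N cls rk mu i itm S) h =
     measure_pmf.expectation (hr_step \<gamma> E N cls rk mu itm (fst S)) (\<lambda>X'. h (upd \<gamma> E N cls mu i itm S X'))"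
  by (simp add: astep_def)

lemma exp_arun_cons:
  fixes h :: "('i \<times> 'a) set \<times> 'i set \<times> 'i set \<Rightarrow> real"
  assumes "finite N"
  shows "measure_pmf.expectation (arun \<gamma> E N cls rk mu i S (itm # os)) h =
     measure_pmf.expectation (astep \<gamma> E N cls rk mu i itm S) (\<lambda>S'. measure_pmf.expectation (arun \<gamma> E N cls rk mu i S' os) h)"
  using assms by (simp add: exp_bind_fin finite_astep finite_arun)

lemma exp_xrun_cons:
  fixes h :: "('i \<times> 'a) set \<Rightarrow> real"
  assumes "finite N"
  shows "measure_pmf.expectation (xrun \<gamma> E N cls rk mu X (itm # os)) h =
     measure_pmf.expectation (hr_step \<gamma> E N cls rk mu itm X) (\<lambda>X'. measure_pmf.expectation (xrun \<gamma> E N cls rk mu X' os) h)"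
  using assms by (simp add: exp_bind_fin finite_hr_step finite_xrun)

lemma hr_step_cases:
  assumes "X' \<in> set_pmf (hr_step \<gamma> E N cls rk mu itm X)" "finite N"
  shows "X' = X \<or> (\<exists>b \<in> N. (itm, b) \<in> E \<and> unmatched X b \<and> X' = insert (itm, b) X)"
proof -
  consider (a) "C1 \<gamma> E N mu itm X \<noteq> {}" | (b) "C1 \<gamma> E N mu itm X = {}" "C2 \<gamma> E N mu itm X \<noteq> {}"
    | (c) "C1 \<gamma> E N mu itm X = {}" "C2 \<gamma> E N mu itm X = {}" by blast
  then show ?thesis
  proof cases
    case a
    then obtain c where c: "c \<in> cls ` C1 \<gamma> E N mu itm X" "X' = insert (itm, pk1 (C1 \<gamma> E N mu itm X) cls rk c) X"
      using assms by (auto simp: hr_step_alt finite_C1)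
    then show ?thesis using pk1_prop[OF finite_C1[OF assms(2)] c(1), of rk] by (auto simp: C1_def)
  next
    case b
    then show ?thesis using assms pk2_prop[OF finite_C2[OF assms(2)] b(2), of mu] by (auto simp: hr_step_alt C2_def)
  next
    case c then show ?thesis using assms by (auto simp: hr_step_alt)
  qed
qed

definition matching :: "('i \<times> 'a) set \<Rightarrow> bool" where
  "matching X \<longleftrightarrow> (\<forall>p \<in> X. \<forall>q \<in> X. fst p = fst q \<longleftrightarrow> snd p = snd q)"

definition hinv where
  "hinv \<gamma> E N cls mu i D S \<longleftrightarrow> finite (fst S) \<and> fst S \<subseteq> E \<and> snd ` fst S \<subseteq> N \<and> fst ` fst S \<subseteq> D
     \<and> fst (snd S) \<union> snd (snd S) = D \<and> matching (fst S)
     \<and> (\<forall>ob \<in> snd (snd S). \<forall>b \<in> N. mu b \<le> \<gamma> \<and> cls b = i \<and> (ob, b) \<in> E \<longrightarrow> \<not> unmatched (fst S) b)"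

lemma inv_step:
  assumes "hinv \<gamma> E N cls mu i D S" "itm \<notin> D" "S' \<in> set_pmf (astep \<gamma> E N cls rk mu i itm S)" "finite N"
  shows "hinv \<gamma> E N cls mu i (insert itm D) S'"
proof -
  obtain X T Q where S: "S = (X, T, Q)" by (cases S) auto
  from assms(3) obtain X' where X': "X' \<in> set_pmf (hr_step \<gamma> E N cls rk mu itm X)"
    and S': "S' = upd \<gamma> E N cls mu i itm S X'" by (auto simp: astep_def S)
  have sub: "X \<subseteq> X'" using hr_step_cases[OF X' assms(4)] by auto
  have um: "unmatched X' b \<Longrightarrow> unmatched X b" for b using sub by (auto simp: unmatched_def)
  have A: "finite X' \<and> X' \<subseteq> E \<and> snd ` X' \<subseteq> N \<and> fst ` X' \<subseteq> insert itm D \<and> matching X'"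
    using hr_step_cases[OF X' assms(4)] assms(1,2) unfolding S hinv_def
    by (auto simp: matching_def unmatched_def image_iff)
  show ?thesis
  proof (cases "trig \<gamma> E N cls mu i itm X")
    case True
    then show ?thesis using A assms(1) um unfolding S' S hinv_def upd_def by (auto 0 3)
  next
    case False
    then have "\<forall>b \<in> N. mu b \<le> \<gamma> \<and> cls b = i \<and> (itm, b) \<in> E \<longrightarrow> \<not> unmatched X b"
      by (auto simp: trig_def C1_def)
    then show ?thesis using A assms(1) um False unfolding S' S hinv_def upd_def by (auto dest: um)
  qed
qed


lemma inv_arun:
  assumes "hinv \<gamma> E N cls mu i D S" "distinct os" "set os \<inter> D = {}"
    "S' \<in> set_pmf (arun \<gamma> E N cls rk mu i S os)" "finite N"
  shows "hinv \<gamma> E N cls mu i (D \<union> set os) S'"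
  using assms
proof (induction os arbitrary: S D)
  case Nil then show ?case by simp
next
  case (Cons itm os)
  from Cons.prems(4) obtain S1 where S1: "S1 \<in> set_pmf (astep \<gamma> E N cls rk mu i itm S)"
    "S' \<in> set_pmf (arun \<gamma> E N cls rk mu i S1 os)" by auto
  have "hinv \<gamma> E N cls mu i (insert itm D) S1"
    using inv_step[OF Cons.prems(1) _ S1(1) Cons.prems(5)] Cons.prems(3) by auto
  from Cons.IH[OF this _ _ S1(2) Cons.prems(5)] Cons.prems(2,3) show ?case by auto
qed

lemma mono_xrun:
  assumes "X' \<in> set_pmf (xrun \<gamma> E N cls rk mu X os)" "finite N"
  shows "X \<subseteq> X'"
  using assms
proof (induction os arbitrary: X)
  case Nil then show ?case by simp
next
  case (Cons itm os)
  then obtain X1 where "X1 \<in> set_pmf (hr_step \<gamma> E N cls rk mu itm X)" "X' \<in> set_pmf (xrun \<gamma> E N cls rk mu X1 os)"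
    by auto
  then show ?case using Cons hr_step_cases[of X1] by blast
qed

definition Bd where
  "Bd \<gamma> E N cls mu j a X Q \<longleftrightarrow> \<not> mu a \<le> \<gamma> \<and> unmatched X a \<and> (\<exists>ob \<in> Q. (ob, a) \<in> E \<and> class_items N cls j X ob = 1)"

lemma class_value_alt:
  assumes "matching X" "finite X" "snd ` X \<subseteq> N"
  shows "class_value N cls i X = real (card {a \<in> N. cls a = i \<and> \<not> unmatched X a})"
proof -
  have "bij_betw snd {p \<in> X. snd p \<in> N \<and> cls (snd p) = i} {a \<in> N. cls a = i \<and> \<not> unmatched X a}"
  proof (rule bij_betwI')
    fix p q assume "p \<in> {p \<in> X. snd p \<in> N \<and> cls (snd p) = i}" "q \<in> {p \<in> X. snd p \<in> N \<and> cls (snd p) = i}"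
    then have "fst p = fst q \<longleftrightarrow> snd p = snd q" using assms(1) unfolding matching_def by blast
    then show "(snd p = snd q) = (p = q)" by (auto intro: prod_eqI)
  next
    fix p assume "p \<in> {p \<in> X. snd p \<in> N \<and> cls (snd p) = i}"
    then show "snd p \<in> {a \<in> N. cls a = i \<and> \<not> unmatched X a}" by (auto simp: unmatched_def)
  next
    fix a assume "a \<in> {a \<in> N. cls a = i \<and> \<not> unmatched X a}"
    then show "\<exists>p \<in> {p \<in> X. snd p \<in> N \<and> cls (snd p) = i}. a = snd p" by (auto simp: unmatched_def)
  qed
  then show ?thesis unfolding class_value_def by (simp add: bij_betw_same_card)
qed


lemma sum_ind_card: "finite A \<Longrightarrow> (\<Sum>a\<in>A. if P a then 1 else 0 :: real) = real (card {a \<in> A. P a})"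
  by (simp add: sum.inter_filter[symmetric])

lemma final_bound:
  fixes M :: "'i set" and N :: "'a set" and E :: "('i \<times> 'a) set"
  assumes hinv: "hinv \<gamma> E N cls mu i M (X, T, Q)" and fin: "finite M" "finite N" and EMN: "E \<subseteq> M \<times> N"
  shows "frac_value M N E cls i (class_items N cls j X) \<le> class_value N cls i X
           + real (card {ob \<in> T. class_items N cls j X ob = 1})
           + real (card {a \<in> N. cls a = i \<and> Bd \<gamma> E N cls mu j a X Q})"
proof -
  let ?y = "class_items N cls j X"
  let ?Ni = "{a \<in> N. cls a = i}"
  let ?Ma = "\<lambda>a. {itm \<in> M. (itm, a) \<in> E}"
  let ?Bs = "{a \<in> N. cls a = i \<and> Bd \<gamma> E N cls mu j a X Q}"
  let ?Ms = "{a \<in> N. cls a = i \<and> \<not> unmatched X a}"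
  let ?w = "\<lambda>a. (if \<not> unmatched X a then 1 else 0) + (if Bd \<gamma> E N cls mu j a X Q then 1 else 0 :: real)"
  from hinv have TQ: "T \<union> Q = M" and fX: "finite X" "snd ` X \<subseteq> N" "matching X"
    and Qinv: "\<forall>ob\<in>Q. \<forall>b\<in>N. mu b \<le> \<gamma> \<and> cls b = i \<and> (ob, b) \<in> E \<longrightarrow> \<not> unmatched X b"
    by (auto simp: hinv_def)
  have TM: "T \<subseteq> M" using TQ by auto
  have fT: "finite T" using TM fin(1) finite_subset by blast
  have y01: "?y itm = 0 \<or> ?y itm = 1" for itm by (simp add: class_items_def)
  have cv: "class_value N cls i X = real (card ?Ms)" using class_value_alt[OF fX(3,1,2)] by simp
  have bound: "(\<Sum>e\<in>{e \<in> E. snd e \<in> N \<and> cls (snd e) = i}. x e) \<le> class_value N cls i X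
           + real (card {ob \<in> T. ?y ob = 1}) + real (card ?Bs)"
    if x0: "\<forall>e. 0 \<le> x e"
      and xi: "\<forall>itm\<in>M. (\<Sum>a\<in>{a \<in> N. cls a = i \<and> (itm, a) \<in> E}. x (itm, a)) \<le> ?y itm"
      and xa: "\<forall>a\<in>N. cls a = i \<longrightarrow> (\<Sum>itm\<in>?Ma a. x (itm, a)) \<le> 1" for x
  proof -
    have Ei: "{e \<in> E. snd e \<in> N \<and> cls (snd e) = i} = prod.swap ` (SIGMA a:?Ni. ?Ma a)"
      using EMN by force
    have S1: "(\<Sum>e\<in>{e \<in> E. snd e \<in> N \<and> cls (snd e) = i}. x e) = (\<Sum>a\<in>?Ni. \<Sum>itm\<in>?Ma a. x (itm, a))"
      unfolding Ei using fin
      by (subst sum.reindex) (auto simp: sum.Sigma case_prod_beta prod.swap_def)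
    have S2: "(\<Sum>itm\<in>?Ma a. x (itm, a)) \<le> ?w a + (\<Sum>itm\<in>{itm \<in> T. (itm, a) \<in> E}. x (itm, a))"
      if a: "a \<in> ?Ni" for a
    proof -
      have fA: "finite (?Ma a)" using fin by auto
      have split: "(\<Sum>itm\<in>?Ma a. x (itm, a)) = (\<Sum>itm\<in>?Ma a \<inter> T. x (itm, a)) + (\<Sum>itm\<in>?Ma a - T. x (itm, a))"
        using sum.Int_Diff[OF fA] by blast
      have AT: "?Ma a \<inter> T = {itm \<in> T. (itm, a) \<in> E}" using TM by auto
      have nnT: "0 \<le> (\<Sum>itm\<in>{itm \<in> T. (itm, a) \<in> E}. x (itm, a))" using x0 by (simp add: sum_nonneg)
      have le1: "(\<Sum>itm\<in>?Ma a. x (itm, a)) \<le> 1" using xa a by auto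
      show ?thesis
      proof (cases "\<not> unmatched X a \<or> Bd \<gamma> E N cls mu j a X Q")
        case True
        then have "1 \<le> ?w a" by auto
        then show ?thesis using le1 nnT by linarith
      next
        case False
        have z: "x (itm, a) = 0" if itm: "itm \<in> ?Ma a - T" for itm
        proof -
          have "itm \<in> Q" using itm TQ by auto
          then have "\<not> mu a \<le> \<gamma>" using Qinv a itm False by auto
          then have "?y itm \<noteq> 1" using False a itm \<open>itm \<in> Q\<close> by (auto simp: Bd_def)
          then have y0: "?y itm = 0" using y01 by blast
          have "x (itm, a) \<le> (\<Sum>a'\<in>{a' \<in> N. cls a' = i \<and> (itm, a') \<in> E}. x (itm, a'))"
            using a itm fin x0 by (intro member_le_sum) auto
          also have "\<dots> \<le> 0" using xi itm y0 by auto
          finally show ?thesis using x0 by (meson order_antisym)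
        qed
        have "(\<Sum>itm\<in>?Ma a - T. x (itm, a)) = 0" using z by (intro sum.neutral) blast
        then show ?thesis using split AT by (simp add: add_nonneg_nonneg)
      qed
    qed
    have S3: "(\<Sum>a\<in>?Ni. \<Sum>itm\<in>{itm \<in> T. (itm, a) \<in> E}. x (itm, a)) \<le> real (card {ob \<in> T. ?y ob = 1})"
    proof -
      have "(\<Sum>a\<in>?Ni. \<Sum>itm\<in>{itm \<in> T. (itm, a) \<in> E}. x (itm, a))
          = (\<Sum>itm\<in>T. \<Sum>a\<in>{a \<in> ?Ni. (itm, a) \<in> E}. x (itm, a))"
        using fin fT by (intro sum.swap_restrict) auto
      also have "\<dots> \<le> (\<Sum>itm\<in>T. ?y itm)"
      proof (rule sum_mono)
        fix itm assume "itm \<in> T"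
        then have "itm \<in> M" using TM by auto
        moreover have "{a \<in> ?Ni. (itm, a) \<in> E} = {a \<in> N. cls a = i \<and> (itm, a) \<in> E}" by auto
        ultimately show "(\<Sum>a\<in>{a \<in> ?Ni. (itm, a) \<in> E}. x (itm, a)) \<le> ?y itm" using xi by auto
      qed
      also have "\<dots> = (\<Sum>itm\<in>T. if ?y itm = 1 then 1 else 0)"
        by (intro sum.cong) (use y01 in auto)
      also have "\<dots> = real (card {ob \<in> T. ?y ob = 1})" using fT by (rule sum_ind_card)
      finally show ?thesis .
    qed
    have S4: "(\<Sum>a\<in>?Ni. ?w a) = real (card ?Ms) + real (card ?Bs)"
    proof -
      have "(\<Sum>a\<in>?Ni. ?w a) = (\<Sum>a\<in>?Ni. if \<not> unmatched X a then 1 else 0) + (\<Sum>a\<in>?Ni. if Bd \<gamma> E N cls mu j a X Q then 1 else 0)"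
        by (simp add: sum.distrib)
      also have "\<dots> = real (card {a \<in> ?Ni. \<not> unmatched X a}) + real (card {a \<in> ?Ni. Bd \<gamma> E N cls mu j a X Q})"
        using fin by (simp add: sum_ind_card)
      also have "{a \<in> ?Ni. \<not> unmatched X a} = ?Ms" by auto
      also have "{a \<in> ?Ni. Bd \<gamma> E N cls mu j a X Q} = ?Bs" by auto
      finally show ?thesis .
    qed
    have "(\<Sum>a\<in>?Ni. \<Sum>itm\<in>?Ma a. x (itm, a)) \<le> (\<Sum>a\<in>?Ni. ?w a + (\<Sum>itm\<in>{itm \<in> T. (itm, a) \<in> E}. x (itm, a)))"
      by (rule sum_mono) (rule S2)
    also have "\<dots> = (\<Sum>a\<in>?Ni. ?w a) + (\<Sum>a\<in>?Ni. \<Sum>itm\<in>{itm \<in> T. (itm, a) \<in> E}. x (itm, a))"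
      by (rule sum.distrib)
    finally show ?thesis using S1 S3 S4 cv by linarith
  qed
  have ne: "(\<Sum>e\<in>{e \<in> E. snd e \<in> N \<and> cls (snd e) = i}. (\<lambda>_. 0::real) e) \<in>
     {(\<Sum>e \<in> {e \<in> E. snd e \<in> N \<and> cls (snd e) = i}. x e) | x :: 'i \<times> 'a \<Rightarrow> real.
            (\<forall>e. 0 \<le> x e) \<and>
            (\<forall>itm \<in> M. (\<Sum>a \<in> {a \<in> N. cls a = i \<and> (itm, a) \<in> E}. x (itm, a)) \<le> ?y itm) \<and>
            (\<forall>a \<in> N. cls a = i \<longrightarrow> (\<Sum>itm \<in> {itm \<in> M. (itm, a) \<in> E}. x (itm, a)) \<le> 1)}"
    using y01 by (intro CollectI exI[of _ "\<lambda>_. 0"]) (auto, metis order_refl zero_le_one)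
  show ?thesis unfolding frac_value_def
    by (rule cSup_least) (use ne in blast, use bound in blast)
qed


definition cT where
  "cT N cls j S = real (card {ob \<in> fst (snd S). class_items N cls j (fst S) ob = 1})"

lemma class_items_insert:
  assumes "itm \<notin> fst ` X" "b \<in> N"
  shows "class_items N cls j (insert (itm, b) X) ob =
           (if ob = itm then (if cls b = j then 1 else 0) else class_items N cls j X ob)"
  using assms by (auto simp: class_items_def image_iff)

lemma cT_V_insert:
  assumes hinv: "hinv \<gamma> E N cls mu i D S" and "itm \<notin> D" "b \<in> N" "finite D"
  shows "cT N cls j (upd \<gamma> E N cls mu i itm S (insert (itm, b) (fst S))) - class_value N cls i (insert (itm, b) (fst S))
       = cT N cls j S - class_value N cls i (fst S)
         + (if trig \<gamma> E N cls mu i itm (fst S) \<and> cls b = j then 1 else 0) - (if cls b = i then 1 else 0)"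
proof -
  obtain X T Q where S: "S = (X, T, Q)" by (cases S) auto
  from hinv have fX: "finite X" "fst ` X \<subseteq> D" "T \<subseteq> D" by (auto simp: hinv_def S)
  have iX: "itm \<notin> fst ` X" using fX assms(2) by auto
  have iT: "itm \<notin> T" using fX assms(2) by auto
  have pX: "(itm, b) \<notin> X" using iX by force
  have fT: "finite T" using fX(3) assms(4) finite_subset by blast
  let ?y = "class_items N cls j X" and ?y' = "class_items N cls j (insert (itm, b) X)"
  have yy: "?y' ob = (if ob = itm then (if cls b = j then 1 else 0) else ?y ob)" for ob
    using class_items_insert[OF iX assms(3)] by simp
  have V: "class_value N cls i (insert (itm, b) X) = class_value N cls i X + (if cls b = i then 1 else 0)"
  proof (cases "cls b = i")
    case True
    then have "{p \<in> insert (itm, b) X. snd p \<in> N \<and> cls (snd p) = i} = insert (itm, b) {p \<in> X. snd p \<in> N \<and> cls (snd p) = i}"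
      using assms(3) by auto
    then show ?thesis using pX fX(1) True by (simp add: class_value_def)
  next
    case False
    then have "{p \<in> insert (itm, b) X. snd p \<in> N \<and> cls (snd p) = i} = {p \<in> X. snd p \<in> N \<and> cls (snd p) = i}"
      by auto
    then show ?thesis using False by (simp add: class_value_def)
  qed
  have C0: "{ob \<in> T. ?y' ob = 1} = {ob \<in> T. ?y ob = 1}" using iT yy by auto
  have C: "cT N cls j (upd \<gamma> E N cls mu i itm S (insert (itm, b) X)) = cT N cls j S
           + (if trig \<gamma> E N cls mu i itm X \<and> cls b = j then 1 else 0)"
  proof (cases "trig \<gamma> E N cls mu i itm X")
    case True
    have T': "fst (snd (upd \<gamma> E N cls mu i itm S (insert (itm, b) X))) = insert itm T" using True by (simp add: upd_def S)
    have e: "cT N cls j (upd \<gamma> E N cls mu i itm S (insert (itm, b) X)) = real (card {ob \<in> insert itm T. ?y' ob = 1})"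
      unfolding cT_def T' fst_upd ..
    show ?thesis
    proof (cases "cls b = j")
      case True
      then have "{ob \<in> insert itm T. ?y' ob = 1} = insert itm {ob \<in> T. ?y ob = 1}" using C0 yy by auto
      then show ?thesis using True \<open>trig \<gamma> E N cls mu i itm X\<close> iT fT e by (simp add: cT_def S)
    next
      case False
      then have "{ob \<in> insert itm T. ?y' ob = 1} = {ob \<in> T. ?y ob = 1}" using C0 yy iT by auto
      then show ?thesis using False e by (simp add: cT_def S)
    qed
  next
    case False
    have T': "fst (snd (upd \<gamma> E N cls mu i itm S (insert (itm, b) X))) = T" using False by (simp add: upd_def S)
    have e: "cT N cls j (upd \<gamma> E N cls mu i itm S (insert (itm, b) X)) = real (card {ob \<in> T. ?y' ob = 1})"
      unfolding cT_def T' fst_upd ..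
    then show ?thesis using False C0 by (simp add: cT_def S)
  qed
  show ?thesis using C V by (simp add: S)
qed


lemma avg_le:
  fixes d :: "nat \<Rightarrow> real"
  assumes "finite Z" "Z \<noteq> {}" "(\<Sum>c\<in>Z. d c) \<le> 0"
  shows "(\<Sum>c\<in>Z. base + d c) / real (card Z) \<le> base"
proof -
  have "card Z > 0" using assms by (simp add: card_gt_0_iff)
  then have "(\<Sum>c\<in>Z. base + d c) / real (card Z) = base + (\<Sum>c\<in>Z. d c) / real (card Z)"
    by (simp add: sum.distrib field_simps)
  also have "\<dots> \<le> base" using assms(3) \<open>card Z > 0\<close> by (simp add: divide_nonpos_pos)
  finally show ?thesis .
qed

lemma mart_step:
  assumes hinv: "hinv \<gamma> E N cls mu i D S" and "itm \<notin> D" "finite D" "finite N"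
  shows "measure_pmf.expectation (astep \<gamma> E N cls rk mu i itm S) (\<lambda>S'. cT N cls j S' - class_value N cls i (fst S'))
         \<le> cT N cls j S - class_value N cls i (fst S)"
proof -
  let ?X = "fst S"
  let ?C1 = "C1 \<gamma> E N mu itm ?X" and ?C2 = "C2 \<gamma> E N mu itm ?X"
  let ?tr = "trig \<gamma> E N cls mu i itm ?X"
  let ?base = "cT N cls j S - class_value N cls i ?X"
  have ins: "cT N cls j (upd \<gamma> E N cls mu i itm S (insert (itm, b) ?X)) - class_value N cls i (insert (itm, b) ?X)
       = ?base + (if ?tr \<and> cls b = j then 1 else 0) - (if cls b = i then 1 else 0)" if "b \<in> N" for b
    using cT_V_insert[OF hinv assms(2) that assms(3)] by simp
  show ?thesis
  proof (cases "?C1 \<noteq> {}")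
    case True
    let ?Z = "cls ` ?C1"
    have fZ: "finite ?Z" "?Z \<noteq> {}" using True finite_C1[OF assms(4), of \<gamma> E mu itm ?X] by auto
    have pk: "pk1 ?C1 cls rk c \<in> N \<and> cls (pk1 ?C1 cls rk c) = c" if "c \<in> ?Z" for c
      using pk1_prop[OF finite_C1[OF assms(4)] that, of rk] by (auto simp: C1_def)
    have "measure_pmf.expectation (astep \<gamma> E N cls rk mu i itm S) (\<lambda>S'. cT N cls j S' - class_value N cls i (fst S'))
        = (\<Sum>c\<in>?Z. ?base + ((if ?tr \<and> c = j then 1 else 0) - (if c = i then 1 else 0))) / real (card ?Z)"
      using True assms(4) by (simp add: exp_astep exp_hr_step ins pk add_diff_eq cong: sum.cong)
    also have "\<dots> \<le> ?base"
    proof (rule avg_le[OF fZ])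
      have "(\<Sum>c\<in>?Z. (if ?tr \<and> c = j then 1 else 0) - (if c = i then 1 else 0 :: real))
          = (\<Sum>c\<in>?Z. if c = j then (if ?tr then 1 else 0) else 0) - (\<Sum>c\<in>?Z. if c = i then 1 else 0)"
        by (subst sum_subtractf[symmetric]) (rule sum.cong; auto)
      also have "\<dots> = (if j \<in> ?Z then (if ?tr then 1 else 0) else 0) - (if i \<in> ?Z then 1 else 0)"
        using fZ by (simp add: sum.delta)
      also have "\<dots> \<le> 0" by (simp add: trig_def)
      finally show "(\<Sum>c\<in>?Z. (if ?tr \<and> c = j then 1 else 0) - (if c = i then 1 else 0 :: real)) \<le> 0" .
    qed
    finally show ?thesis .
  next
    case False
    then have ntr: "\<not> ?tr" by (simp add: trig_def)
    show ?thesis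
    proof (cases "?C2 \<noteq> {}")
      case True
      have pk: "pk2 ?C2 mu \<in> N" using pk2_prop[OF finite_C2[OF assms(4)] True, of mu] by (auto simp: C2_def)
      show ?thesis using False True assms(4) ntr by (simp add: exp_astep exp_hr_step ins[OF pk])
    next
      case False2: False
      have "cT N cls j (upd \<gamma> E N cls mu i itm S ?X) = cT N cls j S"
        using ntr by (simp add: cT_def upd_def)
      then show ?thesis using False False2 assms(4) by (simp add: exp_astep exp_hr_step)
    qed
  qed
qed

lemma mart_run:
  assumes "hinv \<gamma> E N cls mu i D S" "distinct os" "set os \<inter> D = {}" "finite D" "finite N"
  shows "measure_pmf.expectation (arun \<gamma> E N cls rk mu i S os) (\<lambda>S'. cT N cls j S' - class_value N cls i (fst S'))
         \<le> cT N cls j S - class_value N cls i (fst S)"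
  using assms
proof (induction os arbitrary: S D)
  case Nil then show ?case by simp
next
  case (Cons itm os)
  let ?f = "\<lambda>S'. cT N cls j S' - class_value N cls i (fst S')"
  have "measure_pmf.expectation (arun \<gamma> E N cls rk mu i S (itm # os)) ?f
      = measure_pmf.expectation (astep \<gamma> E N cls rk mu i itm S) (\<lambda>S'. measure_pmf.expectation (arun \<gamma> E N cls rk mu i S' os) ?f)"
    using Cons.prems(5) by (rule exp_arun_cons)
  also have "\<dots> \<le> measure_pmf.expectation (astep \<gamma> E N cls rk mu i itm S) ?f"
  proof (rule integral_mono_AE)
    show "integrable (measure_pmf (astep \<gamma> E N cls rk mu i itm S)) (\<lambda>S'. measure_pmf.expectation (arun \<gamma> E N cls rk mu i S' os) ?f)"
      by (rule integrable_measure_pmf_finite[OF finite_astep[OF Cons.prems(5)]])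
    show "integrable (measure_pmf (astep \<gamma> E N cls rk mu i itm S)) ?f"
      by (rule integrable_measure_pmf_finite[OF finite_astep[OF Cons.prems(5)]])
    show "AE S' in measure_pmf (astep \<gamma> E N cls rk mu i itm S). measure_pmf.expectation (arun \<gamma> E N cls rk mu i S' os) ?f \<le> ?f S'"
    proof (rule AE_pmfI)
      fix S' assume S': "S' \<in> set_pmf (astep \<gamma> E N cls rk mu i itm S)"
      have "hinv \<gamma> E N cls mu i (insert itm D) S'"
        using inv_step[OF Cons.prems(1) _ S' Cons.prems(5)] Cons.prems(3) by auto
      then show "measure_pmf.expectation (arun \<gamma> E N cls rk mu i S' os) ?f \<le> ?f S'"
        using Cons.IH[of "insert itm D" S'] Cons.prems by auto
    qed
  qed
  also have "\<dots> \<le> ?f S" using mart_step[OF Cons.prems(1) _ Cons.prems(4,5)] Cons.prems(3) by auto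
  finally show ?case .
qed


lemma exp_mono_fin:
  fixes f g :: "'b \<Rightarrow> real"
  assumes "finite (set_pmf p)" "\<And>x. x \<in> set_pmf p \<Longrightarrow> f x \<le> g x"
  shows "measure_pmf.expectation p f \<le> measure_pmf.expectation p g"
  using assms by (intro integral_mono_AE integrable_measure_pmf_finite AE_pmfI) auto

lemma exp_nonneg:
  fixes f :: "'b \<Rightarrow> real"
  assumes "\<And>x. x \<in> set_pmf p \<Longrightarrow> 0 \<le> f x"
  shows "0 \<le> measure_pmf.expectation p f"
  using assms by (intro integral_nonneg_AE AE_pmfI) auto

lemma exp_nonpos:
  fixes f :: "'b \<Rightarrow> real"
  assumes "\<And>x. x \<in> set_pmf p \<Longrightarrow> f x \<le> 0"
  shows "measure_pmf.expectation p f \<le> 0"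
proof -
  have "0 \<le> measure_pmf.expectation p (\<lambda>x. - f x)" using assms by (intro exp_nonneg) auto
  then show ?thesis by simp
qed

lemma exp_le1:
  fixes f :: "'b \<Rightarrow> real"
  assumes "finite (set_pmf p)" "\<And>x. x \<in> set_pmf p \<Longrightarrow> f x \<le> 1"
  shows "measure_pmf.expectation p f \<le> 1"
proof -
  have "measure_pmf.expectation p f \<le> measure_pmf.expectation p (\<lambda>_. 1)"
    using assms by (rule exp_mono_fin)
  then show ?thesis by simp
qed

lemma exp_affine:
  fixes g :: "'b \<Rightarrow> real"
  assumes "finite (set_pmf p)"
  shows "measure_pmf.expectation p (\<lambda>x. c * g x + d) = c * measure_pmf.expectation p g + d"
proof -
  have i: "integrable (measure_pmf p) h" for h :: "'b \<Rightarrow> real" by (rule integrable_measure_pmf_finite[OF assms])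
  have "measure_pmf.expectation p (\<lambda>x. c * g x + d) = measure_pmf.expectation p (\<lambda>x. c * g x) + measure_pmf.expectation p (\<lambda>x. d)"
    by (rule Bochner_Integration.integral_add[OF i i])
  then show ?thesis by simp
qed

lemma mono_arun:
  assumes "S' \<in> set_pmf (arun \<gamma> E N cls rk mu i S os)" "finite N"
  shows "fst S \<subseteq> fst S'"
proof -
  have "fst S' \<in> set_pmf (xrun \<gamma> E N cls rk mu (fst S) os)"
    using assms(1) by (metis map_fst_arun pmf.set_map imageI)
  then show ?thesis using mono_xrun assms(2) by blast
qed

lemma C1_minus:
  assumes "\<not> mu a \<le> \<gamma>"
  shows "C1 \<gamma> E (N - {a}) mu itm X = C1 \<gamma> E N mu itm X"
  using assms by (auto simp: C1_def)

lemma step_K1: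
  assumes "a \<in> N" "\<not> mu a \<le> \<gamma>" "mu a \<notin> mu ` (N - {a})" "unmatched (fst S) a" "finite N"
  shows "astep \<gamma> E N cls rk mu i itm S = astep \<gamma> E (N - {a}) cls rk mu i itm S \<or>
         (\<exists>S'. astep \<gamma> E N cls rk mu i itm S = return_pmf S' \<and> \<not> unmatched (fst S') a)"
proof -
  let ?X = "fst S"
  have c1: "C1 \<gamma> E (N - {a}) mu itm ?X = C1 \<gamma> E N mu itm ?X" using assms(2) by (auto simp: C1_def)
  have tr: "trig \<gamma> E (N - {a}) cls mu i itm ?X = trig \<gamma> E N cls mu i itm ?X" by (simp add: trig_def c1)
  have up: "upd \<gamma> E (N - {a}) cls mu i itm S = upd \<gamma> E N cls mu i itm S" by (simp add: upd_def tr fun_eq_iff)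
  show ?thesis
  proof (cases "C1 \<gamma> E N mu itm ?X \<noteq> {} \<or> (itm, a) \<notin> E")
    case True
    have "hr_step \<gamma> E (N - {a}) cls rk mu itm ?X = hr_step \<gamma> E N cls rk mu itm ?X"
    proof (cases "C1 \<gamma> E N mu itm ?X \<noteq> {}")
      case True then show ?thesis by (simp add: hr_step_alt c1)
    next
      case False
      then have "(itm, a) \<notin> E" using \<open>C1 \<gamma> E N mu itm ?X \<noteq> {} \<or> (itm, a) \<notin> E\<close> by blast
      then have "C2 \<gamma> E (N - {a}) mu itm ?X = C2 \<gamma> E N mu itm ?X" by (auto simp: C2_def)
      then show ?thesis by (simp add: hr_step_alt c1)
    qed
    then show ?thesis by (simp add: astep_def up)
  next
    case False
    then have e: "C1 \<gamma> E N mu itm ?X = {}" "(itm, a) \<in> E" by auto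
    let ?C = "C2 \<gamma> E N mu itm ?X" and ?C' = "C2 \<gamma> E (N - {a}) mu itm ?X"
    have aC: "a \<in> ?C" using e assms by (auto simp: C2_def)
    have CC: "?C' = ?C - {a}" by (auto simp: C2_def)
    have fC: "finite ?C" using assms(5) by (simp add: C2_def)
    have pk: "pk2 ?C mu \<in> ?C" "\<forall>b\<in>?C. mu (pk2 ?C mu) \<le> mu b" using pk2_prop[OF fC, of mu] aC by auto
    show ?thesis
    proof (cases "pk2 ?C mu = a")
      case True
      have "astep \<gamma> E N cls rk mu i itm S = return_pmf (upd \<gamma> E N cls mu i itm S (insert (itm, a) ?X))"
        using e aC True by (auto simp: astep_def hr_step_alt)
      then show ?thesis by (auto simp: unmatched_def)
    next
      case False
      let ?b = "pk2 ?C mu"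
      have bC': "?b \<in> ?C'" using pk False CC by auto
      have "?b \<in> N - {a}" using bC' by (simp add: C2_def)
      then have "mu ?b \<noteq> mu a" using assms(3) by (metis image_eqI)
      then have lt: "mu ?b < mu a" using pk aC by force
      have P: "(\<lambda>x. x \<in> ?C \<and> (\<forall>y\<in>?C. mu x \<le> mu y)) = (\<lambda>x. x \<in> ?C' \<and> (\<forall>y\<in>?C'. mu x \<le> mu y))"
      proof (intro ext iffI)
        fix x assume x: "x \<in> ?C \<and> (\<forall>y\<in>?C. mu x \<le> mu y)"
        then have "x \<noteq> a" using lt pk(1) by force
        then show "x \<in> ?C' \<and> (\<forall>y\<in>?C'. mu x \<le> mu y)" using x CC by auto
      next
        fix x assume x: "x \<in> ?C' \<and> (\<forall>y\<in>?C'. mu x \<le> mu y)"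
        then have "mu x \<le> mu ?b" using bC' by auto
        then have "mu x \<le> mu a" using lt by auto
        then show "x \<in> ?C \<and> (\<forall>y\<in>?C. mu x \<le> mu y)" using x CC by auto
      qed
      have "pk2 ?C' mu = pk2 ?C mu" unfolding pk2_def P ..
      moreover have "?C' \<noteq> {}" using bC' by auto
      moreover have "?C \<noteq> {}" using aC by auto
      ultimately have "hr_step \<gamma> E (N - {a}) cls rk mu itm ?X = hr_step \<gamma> E N cls rk mu itm ?X"
        using e by (simp add: hr_step_alt c1)
      then show ?thesis by (simp add: astep_def up)
    qed
  qed
qed

definition psi where
  "psi E N cls j a S \<longleftrightarrow> (\<exists>ob \<in> snd (snd S). (ob, a) \<in> E \<and> class_items N cls j (fst S) ob = 1)"

lemma K1_run:
  assumes "a \<in> N" "\<not> mu a \<le> \<gamma>" "mu a \<notin> mu ` (N - {a})" "finite N"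
  shows "measure_pmf.expectation (arun \<gamma> E N cls rk mu i S os)
           (\<lambda>S'. if Bd \<gamma> E N cls mu j a (fst S') (snd (snd S')) then 1 else 0 :: real)
       \<le> measure_pmf.expectation (arun \<gamma> E (N - {a}) cls rk mu i S os) (\<lambda>S'. if psi E N cls j a S' then 1 else 0 :: real)"
proof (induction os arbitrary: S)
  case Nil
  show ?case by (auto simp: Bd_def psi_def)
next
  case (Cons itm os)
  let ?B = "\<lambda>S'. if Bd \<gamma> E N cls mu j a (fst S') (snd (snd S')) then 1 else 0 :: real"
  let ?P = "\<lambda>S'. if psi E N cls j a S' then 1 else 0 :: real"
  have fNa: "finite (N - {a})" using assms(4) by simp
  have zero: "measure_pmf.expectation (arun \<gamma> E N cls rk mu i S' os') ?B \<le> 0" if "\<not> unmatched (fst S') a" for S' os'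
  proof (rule exp_nonpos)
    fix S'' assume "S'' \<in> set_pmf (arun \<gamma> E N cls rk mu i S' os')"
    then have "fst S' \<subseteq> fst S''" using mono_arun assms(4) by blast
    then have "\<not> unmatched (fst S'') a" using that by (auto simp: unmatched_def)
    then show "?B S'' \<le> 0" by (simp add: Bd_def)
  qed
  have nn: "0 \<le> measure_pmf.expectation p ?P" for p by (rule exp_nonneg) simp
  show ?case
  proof (cases "unmatched (fst S) a")
    case False
    have "measure_pmf.expectation (arun \<gamma> E N cls rk mu i S (itm # os)) ?B \<le> 0" using zero[OF False] .
    then show ?thesis using nn[of "arun \<gamma> E (N - {a}) cls rk mu i S (itm # os)"] by linarith
  next
    case True
    from step_K1[OF assms(1-3) True assms(4)] show ?thesis
    proof
      assume eq: "astep \<gamma> E N cls rk mu i itm S = astep \<gamma> E (N - {a}) cls rk mu i itm S"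
      have "measure_pmf.expectation (arun \<gamma> E N cls rk mu i S (itm # os)) ?B
          = measure_pmf.expectation (astep \<gamma> E (N - {a}) cls rk mu i itm S) (\<lambda>S'. measure_pmf.expectation (arun \<gamma> E N cls rk mu i S' os) ?B)"
        using exp_arun_cons[OF assms(4)] eq by metis
      also have "\<dots> \<le> measure_pmf.expectation (astep \<gamma> E (N - {a}) cls rk mu i itm S) (\<lambda>S'. measure_pmf.expectation (arun \<gamma> E (N - {a}) cls rk mu i S' os) ?P)"
        by (rule exp_mono_fin[OF finite_astep[OF fNa]]) (rule Cons.IH)
      also have "\<dots> = measure_pmf.expectation (arun \<gamma> E (N - {a}) cls rk mu i S (itm # os)) ?P"
        using exp_arun_cons[OF fNa] by metis
      finally show ?thesis .
    next
      assume "\<exists>S'. astep \<gamma> E N cls rk mu i itm S = return_pmf S' \<and> \<not> unmatched (fst S') a"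
      then obtain S' where S': "astep \<gamma> E N cls rk mu i itm S = return_pmf S'" "\<not> unmatched (fst S') a" by blast
      have "measure_pmf.expectation (arun \<gamma> E N cls rk mu i S (itm # os)) ?B = measure_pmf.expectation (arun \<gamma> E N cls rk mu i S' os) ?B"
        using S'(1) by (simp add: bind_return_pmf)
      also have "\<dots> \<le> 0" using zero[OF S'(2)] .
      finally show ?thesis using nn[of "arun \<gamma> E (N - {a}) cls rk mu i S (itm # os)"] by linarith
    qed
  qed
qed

lemma avg_B2a_aux:
  fixes s G z p :: real
  assumes "z \<ge> 1" "s \<le> z" "s \<le> 2 * G + z * p + 1" "0 \<le> G" "p = 0 \<or> p = 1" "0 \<le> s"
  shows "s / z \<le> 2 * ((1 + G) / (z + 1)) + p"
proof (cases "p = 1")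
  case True
  have "s / z \<le> 1" using assms by (simp add: divide_le_eq)
  moreover have "0 \<le> 2 * ((1 + G) / (z + 1))" using assms by simp
  ultimately show ?thesis using True by linarith
next
  case False
  then have p0: "p = 0" using assms by auto
  have key: "s * (z + 1) \<le> 2 * z * (1 + G)"
  proof (cases "2 * G + 1 \<le> z")
    case True
    have "s * (z + 1) \<le> (2 * G + 1) * (z + 1)" using assms p0 by (intro mult_right_mono) auto
    also have "\<dots> \<le> 2 * z * (1 + G)" using True by (simp add: algebra_simps)
    finally show ?thesis .
  next
    case False
    have "s * (z + 1) \<le> z * (z + 1)" using assms by (intro mult_right_mono) auto
    also have "\<dots> \<le> z * (2 * G + 2)" using False assms by (intro mult_left_mono) auto
    finally show ?thesis by (simp add: algebra_simps)
  qed
  have "s / z \<le> 2 * ((1 + G) / (z + 1))"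
    using key assms by (simp add: divide_le_eq field_simps)
  then show ?thesis using p0 by simp
qed


lemma pk1_cong:
  assumes "\<And>x. (x \<in> C \<and> cls x = c) = (x \<in> C' \<and> cls x = c)"
  shows "pk1 C cls rk c = pk1 C' cls rk c"
proof -
  have "(\<lambda>x. x \<in> C \<and> cls x = c \<and> (\<forall>b\<in>C. cls b = c \<longrightarrow> rk x \<le> rk b))
      = (\<lambda>x. x \<in> C' \<and> cls x = c \<and> (\<forall>b\<in>C'. cls b = c \<longrightarrow> rk x \<le> rk b))"
    using assms by blast
  then show ?thesis by (simp add: pk1_def)
qed

lemma pk1_insert:
  assumes "finite C'" "inj_on rk N" "C' \<subseteq> N" "a \<in> N" "c \<in> cls ` C'"
  shows "pk1 (insert a C') cls rk c = a \<or> pk1 (insert a C') cls rk c = pk1 C' cls rk c"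
proof -
  let ?m = "pk1 (insert a C') cls rk c" and ?m' = "pk1 C' cls rk c"
  have m: "?m \<in> insert a C'" "cls ?m = c" "\<forall>b\<in>insert a C'. cls b = c \<longrightarrow> rk ?m \<le> rk b"
    using pk1_prop[of "insert a C'" c cls rk] assms(1,5) by auto
  have m': "?m' \<in> C'" "cls ?m' = c" "\<forall>b\<in>C'. cls b = c \<longrightarrow> rk ?m' \<le> rk b"
    using pk1_prop[of C' c cls rk] assms(1,5) by auto
  show ?thesis
  proof (cases "?m = a")
    case False
    then have "?m \<in> C'" using m by auto
    then have "rk ?m = rk ?m'" using m m' by force
    moreover have "?m \<in> N" "?m' \<in> N" using \<open>?m \<in> C'\<close> m' assms(3) by auto
    ultimately show ?thesis using assms(2) by (auto dest: inj_onD)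
  qed simp
qed

lemma psi_upd_insert:
  assumes "itm \<notin> fst ` fst S" "itm \<notin> snd (snd S)" "b \<in> N"
  shows "psi E N cls j a (upd \<gamma> E N' cls mu i itm S (insert (itm, b) (fst S)))
       = (psi E N cls j a S \<or> (\<not> trig \<gamma> E N' cls mu i itm (fst S) \<and> (itm, a) \<in> E \<and> cls b = j))"
proof -
  have y: "class_items N cls j (insert (itm, b) (fst S)) ob =
           (if ob = itm then (if cls b = j then 1 else 0) else class_items N cls j (fst S) ob)" for ob
    using class_items_insert[OF assms(1,3)] by simp
  have q: "ob \<in> snd (snd S) \<Longrightarrow> ob \<noteq> itm" for ob using assms(2) by auto
  show ?thesis
    unfolding psi_def upd_def fst_conv snd_conv y
    by (cases "trig \<gamma> E N' cls mu i itm (fst S)") (auto dest: q)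
qed

lemma psi_upd_same:
  assumes "itm \<notin> fst ` fst S"
  shows "psi E N cls j a (upd \<gamma> E N' cls mu i itm S (fst S)) = psi E N cls j a S"
proof -
  have "class_items N cls j (fst S) itm = 0" using assms by (force simp: class_items_def)
  then show ?thesis by (auto simp: psi_def upd_def)
qed


lemma div_aux:
  fixes s z p T :: real
  assumes "s \<le> z * p + 2 * T" "z > 0"
  shows "s / z \<le> 2 * (T / z) + p"
proof -
  have "s / z \<le> (z * p + 2 * T) / z" using assms by (simp add: divide_right_mono)
  also have "\<dots> = 2 * (T / z) + p" using assms(2) by (simp add: field_simps)
  finally show ?thesis .
qed

lemma K2_step:
  fixes F :: "('i \<times> 'a) set \<times> 'i set \<times> 'i set \<Rightarrow> real" and G :: "('i \<times> 'a) set \<Rightarrow> real"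
    and N :: "'a set" and E :: "('i \<times> 'a) set"
  assumes aN: "a \<in> N" and mua: "mu a \<le> \<gamma>" and clsa: "cls a = i" and inj: "inj_on rk N" and fN: "finite N"
    and um: "unmatched (fst S) a" and i1: "itm \<notin> fst ` fst S" and i2: "itm \<notin> snd (snd S)"
    and F0: "\<And>S'. 0 \<le> F S'" and F1: "\<And>S'. F S' \<le> 1" and G0: "\<And>X'. 0 \<le> G X'"
    and Gm: "\<And>X'. \<not> unmatched X' a \<Longrightarrow> G X' = 1"
    and IH: "\<And>X'. X' \<in> set_pmf (hr_step \<gamma> E (N - {a}) cls rk mu itm (fst S)) \<Longrightarrow>
               F (upd \<gamma> E (N - {a}) cls mu i itm S X') \<le> 2 * G X'
                 + (if psi E N cls j a (upd \<gamma> E (N - {a}) cls mu i itm S X') then 1 else 0)"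
  shows "measure_pmf.expectation (astep \<gamma> E (N - {a}) cls rk mu i itm S) F
         \<le> 2 * measure_pmf.expectation (hr_step \<gamma> E N cls rk mu itm (fst S)) G
           + (if psi E N cls j a S then 1 else 0)"
proof -
  define X where "X = fst S"
  define C where "C = C1 \<gamma> E N mu itm X"
  define C' where "C' = C1 \<gamma> E (N - {a}) mu itm X"
  let ?Na = "N - {a}"
  let ?p = "if psi E N cls j a S then 1 else 0 :: real"
  let ?U = "upd \<gamma> E ?Na cls mu i itm S"
  have fNa: "finite ?Na" using fN by simp
  have fC': "finite C'" using fNa by (simp add: C'_def C1_def)
  have C'N: "C' \<subseteq> N" by (auto simp: C'_def C1_def)
  have p01: "?p = 0 \<or> ?p = 1" by simp
  have fhr: "finite (set_pmf (hr_step \<gamma> E ?Na cls rk mu itm X))" by (rule finite_hr_step[OF fNa])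
  have Eastep: "measure_pmf.expectation (astep \<gamma> E ?Na cls rk mu i itm S) F
      = measure_pmf.expectation (hr_step \<gamma> E ?Na cls rk mu itm X) (\<lambda>X'. F (?U X'))"
    by (simp add: exp_astep X_def)
  show ?thesis
  proof (cases "(itm, a) \<in> E")
    case False
    have CC: "C1 \<gamma> E N mu itm X = C1 \<gamma> E ?Na mu itm X" using False by (auto simp: C1_def)
    have C2C: "C2 \<gamma> E N mu itm X = C2 \<gamma> E ?Na mu itm X" using False by (auto simp: C2_def)
    have hr: "hr_step \<gamma> E N cls rk mu itm X = hr_step \<gamma> E ?Na cls rk mu itm X"
      by (simp add: hr_step_alt C2C CC)
    have pt: "F (?U X') \<le> 2 * G X' + ?p" if X': "X' \<in> set_pmf (hr_step \<gamma> E ?Na cls rk mu itm X)" for X'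
    proof -
      have "psi E N cls j a (?U X') = psi E N cls j a S"
      proof (cases "X' = X")
        case True then show ?thesis using psi_upd_same[OF i1] by (simp add: X_def)
      next
        case False
        then obtain b where "b \<in> ?Na" "X' = insert (itm, b) X" using hr_step_cases[OF X' fNa] by blast
        then show ?thesis using psi_upd_insert[OF i1 i2, of b] \<open>(itm, a) \<notin> E\<close> by (simp add: X_def)
      qed
      then show ?thesis using IH[of X'] X' by (simp add: X_def)
    qed
    have "measure_pmf.expectation (hr_step \<gamma> E ?Na cls rk mu itm X) (\<lambda>X'. F (?U X'))
        \<le> measure_pmf.expectation (hr_step \<gamma> E ?Na cls rk mu itm X) (\<lambda>X'. 2 * G X' + ?p)"
      by (rule exp_mono_fin[OF fhr]) (rule pt)
    also have "\<dots> = 2 * measure_pmf.expectation (hr_step \<gamma> E ?Na cls rk mu itm X) G + ?p"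
      by (rule exp_affine[OF fhr])
    finally show ?thesis using Eastep hr by (simp add: X_def)
  next
    case True
    have CC: "C = insert a C'" using True aN mua um by (auto simp: C_def C'_def C1_def X_def)
    have Ghr: "measure_pmf.expectation (hr_step \<gamma> E N cls rk mu itm X) G
       = (\<Sum>c\<in>cls ` C. G (insert (itm, pk1 C cls rk c) X)) / real (card (cls ` C))"
      using fN CC unfolding C_def by (simp add: exp_hr_step)
    show ?thesis
    proof (cases "C' = {}")
      case True
      have "C = {a}" using CC True by simp
      then have pa: "pk1 C cls rk i = a" using pk1_prop[of C i cls rk] clsa by auto
      have "measure_pmf.expectation (hr_step \<gamma> E N cls rk mu itm X) G = 1"
        using Ghr \<open>C = {a}\<close> pa clsa Gm[of "insert (itm, a) X"] by (simp add: unmatched_def)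
      moreover have "measure_pmf.expectation (astep \<gamma> E ?Na cls rk mu i itm S) F \<le> 1"
        by (rule exp_le1[OF finite_astep[OF fNa]]) (rule F1)
      ultimately show ?thesis by (simp add: X_def)
    next
      case False
      let ?Z = "cls ` C'"
      let ?Xc = "\<lambda>c. insert (itm, pk1 C' cls rk c) X"
      have fZ: "finite ?Z" "?Z \<noteq> {}" using fC' False by auto
      have zpos: "card ?Z > 0" using fZ by (simp add: card_gt_0_iff)
      have Fexp: "measure_pmf.expectation (astep \<gamma> E ?Na cls rk mu i itm S) F
          = (\<Sum>c\<in>?Z. F (?U (?Xc c))) / real (card ?Z)"
        using Eastep fNa False unfolding C'_def by (simp add: exp_hr_step)
      have memb: "?Xc c \<in> set_pmf (hr_step \<gamma> E ?Na cls rk mu itm X)" if "c \<in> ?Z" for c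
        using that False fC' unfolding C'_def by (auto simp: hr_step_alt)
      have pkc: "pk1 C' cls rk c \<in> N \<and> cls (pk1 C' cls rk c) = c" if "c \<in> ?Z" for c
        using pk1_prop[OF fC' that, of rk] C'N by auto
      have pk_eq: "pk1 C cls rk c = pk1 C' cls rk c" if "c \<noteq> i" for c
        using that clsa by (intro pk1_cong) (auto simp: CC)
      have IHc: "F (?U (?Xc c)) \<le> 2 * G (?Xc c) + (if psi E N cls j a (?U (?Xc c)) then 1 else 0)" if "c \<in> ?Z" for c
        using IH[of "?Xc c"] memb[OF that] by (simp add: X_def)
      have psic: "psi E N cls j a (?U (?Xc c)) = (psi E N cls j a S \<or> (\<not> trig \<gamma> E ?Na cls mu i itm X \<and> c = j))"
        if "c \<in> ?Z" for c
        using psi_upd_insert[where N'="N - {a}" and \<gamma>=\<gamma> and mu=mu and i=i and E=E and N=N and cls=cls and j=j and a=a, OF i1 i2 conjunct1[OF pkc[OF that]]] pkc[OF that] True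
        by (auto simp: X_def)
      have trg: "trig \<gamma> E ?Na cls mu i itm X = (i \<in> ?Z)" by (simp add: trig_def C'_def)
      show ?thesis
      proof (cases "i \<in> ?Z")
        case False
        have ZC: "cls ` C = insert i ?Z" using CC clsa by auto
        have pa: "pk1 C cls rk i = a"
        proof -
          have "pk1 C cls rk i \<in> C" "cls (pk1 C cls rk i) = i"
            using pk1_prop[of C i cls rk] fC' CC clsa by auto
          then show ?thesis using CC False by (metis image_eqI insertE)
        qed
        have Gs: "(\<Sum>c\<in>cls ` C. G (insert (itm, pk1 C cls rk c) X)) = 1 + (\<Sum>c\<in>?Z. G (?Xc c))"
        proof -
          have "(\<Sum>c\<in>cls ` C. G (insert (itm, pk1 C cls rk c) X))
              = G (insert (itm, pk1 C cls rk i) X) + (\<Sum>c\<in>?Z. G (insert (itm, pk1 C cls rk c) X))"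
            unfolding ZC using fZ False by simp
          also have "G (insert (itm, pk1 C cls rk i) X) = 1" using pa Gm by (simp add: unmatched_def)
          also have "(\<Sum>c\<in>?Z. G (insert (itm, pk1 C cls rk c) X)) = (\<Sum>c\<in>?Z. G (?Xc c))"
            using False pk_eq by (intro sum.cong) (auto, metis image_eqI)
          finally show ?thesis .
        qed
        have cardZ: "card (cls ` C) = card ?Z + 1" unfolding ZC using fZ False by simp
        have b1: "(\<Sum>c\<in>?Z. F (?U (?Xc c))) \<le> real (card ?Z)"
          using sum_mono[of ?Z "\<lambda>c. F (?U (?Xc c))" "\<lambda>_. 1"] F1 by simp
        have b2: "(\<Sum>c\<in>?Z. F (?U (?Xc c))) \<le> 2 * (\<Sum>c\<in>?Z. G (?Xc c)) + real (card ?Z) * ?p + 1"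
        proof -
          have "(\<Sum>c\<in>?Z. F (?U (?Xc c))) \<le> (\<Sum>c\<in>?Z. 2 * G (?Xc c) + ?p + (if c = j then 1 else 0))"
          proof (rule sum_mono)
            fix c assume c: "c \<in> ?Z"
            show "F (?U (?Xc c)) \<le> 2 * G (?Xc c) + ?p + (if c = j then 1 else 0)"
              using IHc[OF c] psic[OF c] by (auto split: if_splits)
          qed
          also have "\<dots> = 2 * (\<Sum>c\<in>?Z. G (?Xc c)) + real (card ?Z) * ?p + (if j \<in> ?Z then 1 else 0)"
            using fZ by (simp add: sum.distrib sum_distrib_left)
          also have "\<dots> \<le> 2 * (\<Sum>c\<in>?Z. G (?Xc c)) + real (card ?Z) * ?p + 1" by simp
          finally show ?thesis .
        qed
        have "(\<Sum>c\<in>?Z. F (?U (?Xc c))) / real (card ?Z) \<le> 2 * ((1 + (\<Sum>c\<in>?Z. G (?Xc c))) / (real (card ?Z) + 1)) + ?p"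
          using avg_B2a_aux[OF _ b1 b2 _ p01] zpos G0 F0 by (simp add: sum_nonneg)
        then show ?thesis using Fexp Ghr Gs cardZ by (simp add: X_def[symmetric] add.commute)
      next
        case True
        have ZC: "cls ` C = ?Z" using CC clsa True by auto
        have pt: "F (?U (?Xc c)) \<le> 2 * G (insert (itm, pk1 C cls rk c) X) + ?p" if c: "c \<in> ?Z" for c
        proof -
          have ps: "psi E N cls j a (?U (?Xc c)) = psi E N cls j a S" using psic[OF c] trg True by simp
          show ?thesis
          proof (cases "c = i")
            case False
            then show ?thesis using IHc[OF c] ps pk_eq by simp
          next
            case ci: True
            from pk1_insert[OF fC' inj C'N aN, of c cls] c CC
            have "pk1 C cls rk c = a \<or> pk1 C cls rk c = pk1 C' cls rk c" by simp
            then show ?thesis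
            proof
              assume "pk1 C cls rk c = a"
              then have "G (insert (itm, pk1 C cls rk c) X) = 1" using Gm by (simp add: unmatched_def)
              then show ?thesis using F1[of "?U (?Xc c)"] by simp
            next
              assume "pk1 C cls rk c = pk1 C' cls rk c"
              then show ?thesis using IHc[OF c] ps by simp
            qed
          qed
        qed
        have "(\<Sum>c\<in>?Z. F (?U (?Xc c))) \<le> (\<Sum>c\<in>?Z. 2 * G (insert (itm, pk1 C cls rk c) X) + ?p)"
          by (rule sum_mono) (rule pt)
        also have "\<dots> = 2 * (\<Sum>c\<in>?Z. G (insert (itm, pk1 C cls rk c) X)) + real (card ?Z) * ?p"
          by (simp add: sum.distrib sum_distrib_left)
        finally have "(\<Sum>c\<in>?Z. F (?U (?Xc c))) / real (card ?Z)
            \<le> 2 * ((\<Sum>c\<in>?Z. G (insert (itm, pk1 C cls rk c) X)) / real (card ?Z)) + ?p"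
          using zpos by (intro div_aux) (simp_all add: algebra_simps)
        then show ?thesis using Fexp Ghr ZC by (simp add: X_def[symmetric])
      qed
    qed
  qed
qed


lemma exp_eq1:
  fixes f :: "'b \<Rightarrow> real"
  assumes "\<And>x. x \<in> set_pmf p \<Longrightarrow> f x = 1"
  shows "measure_pmf.expectation p f = 1"
proof -
  have "measure_pmf.expectation p f = measure_pmf.expectation p (\<lambda>_. 1)"
    using assms by (intro integral_cong_AE) (auto simp: AE_measure_pmf_iff)
  then show ?thesis by simp
qed

lemma g_matched:
  assumes "\<not> unmatched X a" "finite N"
  shows "measure_pmf.expectation (xrun \<gamma> E N cls rk mu X os) (\<lambda>X'. if unmatched X' a then 0 else 1 :: real) = 1"
proof (rule exp_eq1)
  fix X' assume "X' \<in> set_pmf (xrun \<gamma> E N cls rk mu X os)"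
  then have "X \<subseteq> X'" using mono_xrun assms(2) by blast
  then show "(if unmatched X' a then 0 else 1 :: real) = 1" using assms(1) by (auto simp: unmatched_def)
qed

lemma K2_run:
  fixes N :: "'a set" and E :: "('i \<times> 'a) set"
  assumes aN: "a \<in> N" and mua: "mu a \<le> \<gamma>" and clsa: "cls a = i" and inj: "inj_on rk N" and fN: "finite N"
  shows "distinct os \<Longrightarrow> set os \<inter> (fst ` fst S \<union> snd (snd S)) = {} \<Longrightarrow>
    measure_pmf.expectation (arun \<gamma> E (N - {a}) cls rk mu i S os) (\<lambda>S'. if psi E N cls j a S' then 1 else 0 :: real)
     \<le> 2 * measure_pmf.expectation (xrun \<gamma> E N cls rk mu (fst S) os) (\<lambda>X'. if unmatched X' a then 0 else 1 :: real)
       + (if psi E N cls j a S then 1 else 0)"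
proof (induction os arbitrary: S)
  case Nil
  then show ?case by simp
next
  case (Cons itm os)
  let ?Na = "N - {a}"
  let ?P = "\<lambda>S'. if psi E N cls j a S' then 1 else 0 :: real"
  let ?m = "\<lambda>X'. if unmatched X' a then 0 else 1 :: real"
  define F where "F = (\<lambda>S'. measure_pmf.expectation (arun \<gamma> E ?Na cls rk mu i S' os) ?P)"
  define G where "G = (\<lambda>X'. measure_pmf.expectation (xrun \<gamma> E N cls rk mu X' os) ?m)"
  have fNa: "finite ?Na" using fN by simp
  have L: "measure_pmf.expectation (arun \<gamma> E ?Na cls rk mu i S (itm # os)) ?P
      = measure_pmf.expectation (astep \<gamma> E ?Na cls rk mu i itm S) F"
    unfolding F_def by (rule exp_arun_cons[OF fNa])
  have R: "measure_pmf.expectation (xrun \<gamma> E N cls rk mu (fst S) (itm # os)) ?m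
      = measure_pmf.expectation (hr_step \<gamma> E N cls rk mu itm (fst S)) G"
    unfolding G_def by (rule exp_xrun_cons[OF fN])
  have F0: "0 \<le> F S'" for S' unfolding F_def by (rule exp_nonneg) simp
  have F1: "F S' \<le> 1" for S' unfolding F_def by (rule exp_le1[OF finite_arun[OF fNa]]) simp
  have G0: "0 \<le> G X'" for X' unfolding G_def by (rule exp_nonneg) simp
  have Gm: "G X' = 1" if "\<not> unmatched X' a" for X' unfolding G_def by (rule g_matched[OF that fN])
  have i1: "itm \<notin> fst ` fst S" and i2: "itm \<notin> snd (snd S)" using Cons.prems(2) by auto
  show ?case
  proof (cases "unmatched (fst S) a")
    case False
    have "measure_pmf.expectation (xrun \<gamma> E N cls rk mu (fst S) (itm # os)) ?m = 1"
      by (rule g_matched[OF False fN])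
    moreover have "measure_pmf.expectation (astep \<gamma> E ?Na cls rk mu i itm S) F \<le> 1"
      by (rule exp_le1[OF finite_astep[OF fNa]]) (rule F1)
    ultimately show ?thesis using L by simp
  next
    case True
    have IH: "F (upd \<gamma> E ?Na cls mu i itm S X') \<le> 2 * G X' + ?P (upd \<gamma> E ?Na cls mu i itm S X')"
      if X': "X' \<in> set_pmf (hr_step \<gamma> E ?Na cls rk mu itm (fst S))" for X'
    proof -
      let ?S' = "upd \<gamma> E ?Na cls mu i itm S X'"
      have A: "fst ` fst ?S' \<subseteq> insert itm (fst ` fst S)" using hr_step_cases[OF X' fNa] by auto
      have B: "snd (snd ?S') \<subseteq> insert itm (snd (snd S))" by (auto simp: upd_def)
      have D1: "set os \<inter> insert itm (fst ` fst S \<union> snd (snd S)) = {}" using Cons.prems by auto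
      have "fst ` fst ?S' \<union> snd (snd ?S') \<subseteq> insert itm (fst ` fst S \<union> snd (snd S))" using A B by blast
      then have "set os \<inter> (fst ` fst ?S' \<union> snd (snd ?S')) = {}" using D1 by blast
      then show ?thesis using Cons.IH[of ?S'] Cons.prems(1) unfolding F_def G_def by simp
    qed
    have "measure_pmf.expectation (astep \<gamma> E ?Na cls rk mu i itm S) F
        \<le> 2 * measure_pmf.expectation (hr_step \<gamma> E N cls rk mu itm (fst S)) G + ?P S"
      by (rule K2_step[OF aN mua clsa inj fN True i1 i2 F0 F1 G0 Gm IH])
    then show ?thesis using L R by simp
  qed
qed


definition rel :: "real \<Rightarrow> 'a set \<Rightarrow> ('a \<Rightarrow> real) \<Rightarrow> ('a \<Rightarrow> real) \<Rightarrow> bool" where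
  "rel \<gamma> N mu mu' \<longleftrightarrow> (\<forall>b\<in>N. (mu b \<le> \<gamma>) = (mu' b \<le> \<gamma>)) \<and>
     (\<forall>b\<in>N. \<forall>c\<in>N. \<not> mu b \<le> \<gamma> \<longrightarrow> \<not> mu c \<le> \<gamma> \<longrightarrow> (mu b \<le> mu c) = (mu' b \<le> mu' c))"

lemma rel_mono: "rel \<gamma> N mu mu' \<Longrightarrow> N' \<subseteq> N \<Longrightarrow> rel \<gamma> N' mu mu'"
  by (auto simp: rel_def)

lemma hr_step_rel:
  assumes "rel \<gamma> N mu mu'"
  shows "hr_step \<gamma> E N cls rk mu itm X = hr_step \<gamma> E N cls rk mu' itm X"
proof -
  have c1: "C1 \<gamma> E N mu itm X = C1 \<gamma> E N mu' itm X" using assms by (auto simp: rel_def C1_def)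
  have c2: "C2 \<gamma> E N mu itm X = C2 \<gamma> E N mu' itm X" using assms by (auto simp: rel_def C2_def)
  have sub: "C2 \<gamma> E N mu' itm X \<subseteq> N" by (auto simp: C2_def)
  have "(\<lambda>x. x \<in> C2 \<gamma> E N mu' itm X \<and> (\<forall>y\<in>C2 \<gamma> E N mu' itm X. mu x \<le> mu y))
      = (\<lambda>x. x \<in> C2 \<gamma> E N mu' itm X \<and> (\<forall>y\<in>C2 \<gamma> E N mu' itm X. mu' x \<le> mu' y))"
  proof -
    have cmp: "(mu x \<le> mu y) = (mu' x \<le> mu' y)" if "x \<in> C2 \<gamma> E N mu' itm X" "y \<in> C2 \<gamma> E N mu' itm X" for x y
      using assms that by (auto simp: rel_def C2_def)
    show ?thesis unfolding fun_eq_iff using cmp by blast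
  qed
  then have p: "pk2 (C2 \<gamma> E N mu' itm X) mu = pk2 (C2 \<gamma> E N mu' itm X) mu'" by (simp add: pk2_def)
  show ?thesis by (simp add: hr_step_alt c1 c2 p)
qed

lemma trig_rel: "rel \<gamma> N mu mu' \<Longrightarrow> trig \<gamma> E N cls mu i itm X = trig \<gamma> E N cls mu' i itm X"
proof -
  assume r: "rel \<gamma> N mu mu'"
  have "C1 \<gamma> E N mu itm X = C1 \<gamma> E N mu' itm X" using r by (auto simp: rel_def C1_def)
  then show ?thesis by (simp add: trig_def)
qed

lemma arun_rel:
  assumes "rel \<gamma> N mu mu'"
  shows "arun \<gamma> E N cls rk mu i S os = arun \<gamma> E N cls rk mu' i S os"
proof (induction os arbitrary: S)
  case Nil then show ?case by simp
next
  case (Cons itm os)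
  have u: "upd \<gamma> E N cls mu i itm S = upd \<gamma> E N cls mu' i itm S"
    by (simp add: upd_def fun_eq_iff trig_rel[OF assms])
  have "astep \<gamma> E N cls rk mu i itm S = astep \<gamma> E N cls rk mu' i itm S"
    by (simp add: astep_def u hr_step_rel[OF assms])
  then show ?case using Cons by simp
qed

lemma xrun_rel:
  assumes "rel \<gamma> N mu mu'"
  shows "xrun \<gamma> E N cls rk mu X os = xrun \<gamma> E N cls rk mu' X os"
  using arun_rel[OF assms, of E cls rk 0 "(X, {}, {})" os] by (metis map_fst_arun fst_conv)

lemma comp_meas: "b \<in> N \<Longrightarrow> (\<lambda>mu. mu b) \<in> borel_measurable (mu_dist N)"
proof -
  assume b: "b \<in> N"
  have "(\<lambda>mu. mu b) \<in> measurable (mu_dist N) (uniform_measure lborel {0..1::real})"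
    unfolding mu_dist_def using b by (rule measurable_component_singleton)
  moreover have "sets (uniform_measure lborel {0..1::real}) = sets borel" by simp
  ultimately show ?thesis by (metis measurable_cong_sets)
qed

definition pat :: "real \<Rightarrow> 'a set \<Rightarrow> ('a \<Rightarrow> real) \<Rightarrow> 'a set \<times> ('a \<times> 'a) set" where
  "pat \<gamma> N mu = ({b \<in> N. mu b \<le> \<gamma>}, {bc \<in> N \<times> N. mu (fst bc) \<le> mu (snd bc)})"

lemma pat_rel:
  assumes eq: "pat \<gamma> N mu = pat \<gamma> N mu'"
  shows "rel \<gamma> N mu mu'"
proof -
  from eq have A: "{b \<in> N. mu b \<le> \<gamma>} = {b \<in> N. mu' b \<le> \<gamma>}"
    and B: "{bc \<in> N \<times> N. mu (fst bc) \<le> mu (snd bc)} = {bc \<in> N \<times> N. mu' (fst bc) \<le> mu' (snd bc)}"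
    unfolding pat_def by simp_all
  have 1: "(mu b \<le> \<gamma>) = (mu' b \<le> \<gamma>)" if "b \<in> N" for b
  proof -
    have "(b \<in> {b \<in> N. mu b \<le> \<gamma>}) = (b \<in> {b \<in> N. mu' b \<le> \<gamma>})" by (simp only: A)
    then show ?thesis using that by simp
  qed
  have 2: "(mu b \<le> mu c) = (mu' b \<le> mu' c)" if "b \<in> N" "c \<in> N" for b c
  proof -
    have "((b, c) \<in> {bc \<in> N \<times> N. mu (fst bc) \<le> mu (snd bc)}) = ((b, c) \<in> {bc \<in> N \<times> N. mu' (fst bc) \<le> mu' (snd bc)})"
      by (simp only: B)
    then show ?thesis using that by simp
  qed
  show ?thesis unfolding rel_def using 1 2 by blast
qed

lemma set_filter_eq: "({x \<in> S. P x} = A) = (A \<subseteq> S \<and> (\<forall>x\<in>S. P x = (x \<in> A)))"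
  by blast

lemma pat_pred:
  assumes "finite N"
  shows "{mu \<in> space (mu_dist N). pat \<gamma> N mu = p} \<in> sets (mu_dist N)"
proof -
  obtain A B where p: "p = (A, B)" by (cases p)
  have e: "(pat \<gamma> N mu = p) = ((A \<subseteq> N \<and> (\<forall>b\<in>N. (mu b \<le> \<gamma>) = (b \<in> A)))
      \<and> (B \<subseteq> N \<times> N \<and> (\<forall>bc\<in>N \<times> N. (mu (fst bc) \<le> mu (snd bc)) = (bc \<in> B))))" for mu
    unfolding p pat_def prod.inject set_filter_eq by (rule refl)
  have p1: "{mu \<in> space (mu_dist N). (mu b \<le> \<gamma>) = (b \<in> A)} \<in> sets (mu_dist N)" if "b \<in> N" for b
  proof -
    have le: "{mu \<in> space (mu_dist N). mu b \<le> (\<lambda>_. \<gamma>) mu} \<in> sets (mu_dist N)"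
      by (rule borel_measurable_le[OF comp_meas[OF that] borel_measurable_const])
    show ?thesis
    proof (cases "b \<in> A")
      case True then show ?thesis using le by simp
    next
      case False then show ?thesis using sets.sets_Collect_neg[OF le] by simp
    qed
  qed
  have p2: "{mu \<in> space (mu_dist N). (mu (fst bc) \<le> mu (snd bc)) = (bc \<in> B)} \<in> sets (mu_dist N)" if "bc \<in> N \<times> N" for bc
  proof -
    have le: "{mu \<in> space (mu_dist N). mu (fst bc) \<le> mu (snd bc)} \<in> sets (mu_dist N)"
      using that by (intro borel_measurable_le comp_meas) auto
    show ?thesis
    proof (cases "bc \<in> B")
      case True then show ?thesis using le by simp
    next
      case False then show ?thesis using sets.sets_Collect_neg[OF le] by simp
    qed
  qed
  have p3: "{mu \<in> space (mu_dist N). \<forall>b\<in>N. (mu b \<le> \<gamma>) = (b \<in> A)} \<in> sets (mu_dist N)"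
    by (rule sets.sets_Collect_finite_All[OF p1 assms])
  have p4: "{mu \<in> space (mu_dist N). \<forall>bc\<in>N \<times> N. (mu (fst bc) \<le> mu (snd bc)) = (bc \<in> B)} \<in> sets (mu_dist N)"
    using assms by (intro sets.sets_Collect_finite_All p2) auto
  have p5: "{mu \<in> space (mu_dist N). A \<subseteq> N \<and> (\<forall>b\<in>N. (mu b \<le> \<gamma>) = (b \<in> A))} \<in> sets (mu_dist N)"
    by (rule sets.sets_Collect_conj[OF p3 sets.sets_Collect_const])
  have p6: "{mu \<in> space (mu_dist N). B \<subseteq> N \<times> N \<and> (\<forall>bc\<in>N \<times> N. (mu (fst bc) \<le> mu (snd bc)) = (bc \<in> B))} \<in> sets (mu_dist N)"
    by (rule sets.sets_Collect_conj[OF p4 sets.sets_Collect_const])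
  have "{mu \<in> space (mu_dist N). (A \<subseteq> N \<and> (\<forall>b\<in>N. (mu b \<le> \<gamma>) = (b \<in> A)))
      \<and> (B \<subseteq> N \<times> N \<and> (\<forall>bc\<in>N \<times> N. (mu (fst bc) \<le> mu (snd bc)) = (bc \<in> B)))} \<in> sets (mu_dist N)"
    by (rule sets.sets_Collect_conj[OF p6 p5])
  then show ?thesis unfolding e .
qed

lemma meas_rel:
  fixes h :: "('a \<Rightarrow> real) \<Rightarrow> real"
  assumes fN: "finite N" and h: "\<And>mu mu'. rel \<gamma> N mu mu' \<Longrightarrow> h mu = h mu'"
  shows "h \<in> borel_measurable (mu_dist N)"
proof -
  let ?P = "Pow N \<times> Pow (N \<times> N)"
  let ?rep = "\<lambda>p. SOME mu. pat \<gamma> N mu = p"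
  have fP: "finite ?P" using fN by simp
  have patP: "pat \<gamma> N mu \<in> ?P" for mu by (auto simp: pat_def)
  have eq: "h mu = (\<Sum>p\<in>?P. (if pat \<gamma> N mu = p then h (?rep p) else 0))" for mu
  proof -
    have "(\<Sum>p\<in>?P. (if pat \<gamma> N mu = p then h (?rep p) else 0)) = h (?rep (pat \<gamma> N mu))"
      using fP patP by (simp add: sum.delta')
    also have "pat \<gamma> N (?rep (pat \<gamma> N mu)) = pat \<gamma> N mu" by (rule someI[of _ mu]) simp
    then have "h (?rep (pat \<gamma> N mu)) = h mu" using h pat_rel by metis
    finally show ?thesis by simp
  qed
  have "(\<lambda>mu. \<Sum>p\<in>?P. (if pat \<gamma> N mu = p then h (?rep p) else 0)) \<in> borel_measurable (mu_dist N)"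
  proof (rule borel_measurable_sum)
    fix p assume "p \<in> ?P"
    have "(\<lambda>mu. if mu \<in> {mu. pat \<gamma> N mu = p} then h (?rep p) else 0) \<in> borel_measurable (mu_dist N)"
      using pat_pred[OF fN, of \<gamma> p] by (intro measurable_If_set) (auto simp: Int_def conj_commute)
    then show "(\<lambda>mu. if pat \<gamma> N mu = p then h (?rep p) else 0) \<in> borel_measurable (mu_dist N)"
      by simp
  qed
  moreover have "h = (\<lambda>mu. \<Sum>p\<in>?P. (if pat \<gamma> N mu = p then h (?rep p) else 0))"
    by (rule ext) (rule eq)
  ultimately show ?thesis by simp
qed


abbreviation UU :: "real measure" where "UU \<equiv> uniform_measure lborel {0..1::real}"

lemma UU_prob: "prob_space UU"
  by (rule prob_space_uniform_measure) simp_all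

lemma UU_psf: "product_sigma_finite (\<lambda>_::'a. UU)"
  unfolding product_sigma_finite_def using prob_space_imp_sigma_finite[OF UU_prob] by blast

lemma UU_pps: "product_prob_space (\<lambda>_::'a. UU)"
  unfolding product_prob_space_def product_prob_space_axioms_def using UU_psf UU_prob by blast

lemma mu_dist_prob: "prob_space (mu_dist N)"
proof -
  interpret product_prob_space "\<lambda>_::'a. UU" N by (rule UU_pps)
  show ?thesis unfolding mu_dist_def by (rule P.prob_space_axioms)
qed

lemma UU_le: "0 \<le> \<gamma> \<Longrightarrow> \<gamma> \<le> 1 \<Longrightarrow> emeasure UU {..\<gamma>} = ennreal \<gamma>"
proof -
  assume g: "0 \<le> \<gamma>" "\<gamma> \<le> 1"
  have "{0..1} \<inter> {..\<gamma>} = {0..\<gamma>}" using g by auto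
  then show ?thesis using g by (simp add: divide_ennreal_def)
qed

lemma UU_gt: "0 \<le> \<gamma> \<Longrightarrow> \<gamma> \<le> 1 \<Longrightarrow> emeasure UU {\<gamma><..} = ennreal (1 - \<gamma>)"
proof -
  assume g: "0 \<le> \<gamma>" "\<gamma> \<le> 1"
  have "{0..1} \<inter> {\<gamma><..} = {\<gamma><..1}" using g by auto
  then show ?thesis using g by (simp add: divide_ennreal_def)
qed

lemma UU_space: "emeasure UU (space UU) = 1"
  using prob_space.emeasure_space_1[OF UU_prob] .

lemma dec:
  fixes f :: "('a \<Rightarrow> real) \<Rightarrow> ennreal"
  assumes "finite N" "a \<in> N" "f \<in> borel_measurable (mu_dist N)"
  shows "(\<integral>\<^sup>+mu. f mu \<partial>mu_dist N) = (\<integral>\<^sup>+x. (\<integral>\<^sup>+t. f (x(a := t)) \<partial>UU) \<partial>PiM (N - {a}) (\<lambda>_. UU))"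
proof -
  interpret product_sigma_finite "\<lambda>_::'a. UU" by (rule UU_psf)
  have N: "insert a (N - {a}) = N" using assms(2) by auto
  show ?thesis
    using product_nn_integral_insert[of "N - {a}" a f] assms unfolding mu_dist_def N by simp
qed

lemma integrable_bnd:
  fixes h :: "('a \<Rightarrow> real) \<Rightarrow> real"
  assumes "h \<in> borel_measurable (mu_dist N)" "\<And>mu. \<bar>h mu\<bar> \<le> B"
  shows "integrable (mu_dist N) h"
proof -
  interpret prob_space "mu_dist N" by (rule mu_dist_prob)
  show ?thesis using assms by (intro integrable_const_bound[where B=B]) auto
qed

lemma nn_eq_int:
  fixes h :: "('a \<Rightarrow> real) \<Rightarrow> real"
  assumes "h \<in> borel_measurable (mu_dist N)" "\<And>mu. \<bar>h mu\<bar> \<le> B" "\<And>mu. 0 \<le> h mu"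
  shows "(\<integral>\<^sup>+mu. ennreal (h mu) \<partial>mu_dist N) = ennreal (integral\<^sup>L (mu_dist N) h)"
  using assms by (intro nn_integral_eq_integral integrable_bnd) auto


lemma AE_UU_notin:
  assumes "finite F"
  shows "AE t in UU. t \<notin> F"
proof -
  have "AE t in lborel. t \<notin> F"
    using assms by (intro AE_not_in countable_imp_null_set_lborel countable_finite)
  then show ?thesis by (intro AE_uniform_measureI) (auto elim!: AE_mp)
qed

lemma int_I1:
  fixes h k :: "('a \<Rightarrow> real) \<Rightarrow> real"
  assumes fN: "finite N" and aN: "a \<in> N" and g0: "0 \<le> \<gamma>" and g1: "\<gamma> \<le> 1"
    and hm: "h \<in> borel_measurable (mu_dist N)" and km: "k \<in> borel_measurable (mu_dist N)"
    and hb: "\<And>mu. 0 \<le> h mu \<and> h mu \<le> B" and kb: "\<And>mu. 0 \<le> k mu \<and> k mu \<le> B"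
    and kinv: "\<And>mu t. k (mu(a := t)) = k mu"
    and hk: "\<And>mu. mu a \<notin> mu ` (N - {a}) \<Longrightarrow> h mu \<le> (if mu a \<le> \<gamma> then 0 else k mu)"
  shows "integral\<^sup>L (mu_dist N) h \<le> (1 - \<gamma>) * integral\<^sup>L (mu_dist N) k"
proof -
  let ?Q = "PiM (N - {a}) (\<lambda>_. UU)"
  have hm': "(\<lambda>mu. ennreal (h mu)) \<in> borel_measurable (mu_dist N)" using hm by measurable
  have km2: "(\<lambda>mu. (1 - \<gamma>) * k mu) \<in> borel_measurable (mu_dist N)" using km by measurable
  have km': "(\<lambda>mu. ennreal ((1 - \<gamma>) * k mu)) \<in> borel_measurable (mu_dist N)" using km by measurable
  have "(\<integral>\<^sup>+mu. ennreal (h mu) \<partial>mu_dist N) = (\<integral>\<^sup>+x. (\<integral>\<^sup>+t. ennreal (h (x(a := t))) \<partial>UU) \<partial>?Q)"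
    by (rule dec[OF fN aN hm'])
  also have "\<dots> \<le> (\<integral>\<^sup>+x. (\<integral>\<^sup>+t. ennreal ((1 - \<gamma>) * k (x(a := t))) \<partial>UU) \<partial>?Q)"
  proof (rule nn_integral_mono)
    fix x :: "'a \<Rightarrow> real"
    have "(\<integral>\<^sup>+t. ennreal (h (x(a := t))) \<partial>UU) \<le> (\<integral>\<^sup>+t. ennreal (k x) * indicator {\<gamma><..} t \<partial>UU)"
    proof (rule nn_integral_mono_AE)
      have ae: "AE t in UU. t \<notin> x ` (N - {a})" using fN by (intro AE_UU_notin) auto
      have pt: "ennreal (h (x(a := t))) \<le> ennreal (k x) * indicator {\<gamma><..} t" if t: "t \<notin> x ` (N - {a})" for t
      proof -
        have "(x(a := t)) ` (N - {a}) = x ` (N - {a})" by auto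
        then have "(x(a := t)) a \<notin> (x(a := t)) ` (N - {a})" using t by simp
        then have "h (x(a := t)) \<le> (if t \<le> \<gamma> then 0 else k (x(a := t)))" using hk[of "x(a := t)"] by simp
        then show ?thesis using kinv[of x t] hb[of "x(a := t)"] by (auto simp: indicator_def)
      qed
      show "AE t in UU. ennreal (h (x(a := t))) \<le> ennreal (k x) * indicator {\<gamma><..} t"
        by (rule AE_mp[OF ae AE_I2]) (use pt in blast)
    qed
    also have "\<dots> = ennreal (k x) * emeasure UU {\<gamma><..}" by (rule nn_integral_cmult_indicator) simp
    also have "\<dots> = ennreal (k x) * ennreal (1 - \<gamma>)" using UU_gt[OF g0 g1] by simp
    also have "\<dots> = ennreal ((1 - \<gamma>) * k x)" using kb[of x] g1 by (simp add: ennreal_mult mult.commute)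
    also have "\<dots> = (\<integral>\<^sup>+t. ennreal ((1 - \<gamma>) * k (x(a := t))) \<partial>UU)"
      using UU_space by (simp add: kinv)
    finally show "(\<integral>\<^sup>+t. ennreal (h (x(a := t))) \<partial>UU) \<le> (\<integral>\<^sup>+t. ennreal ((1 - \<gamma>) * k (x(a := t))) \<partial>UU)" .
  qed
  also have "\<dots> = (\<integral>\<^sup>+mu. ennreal ((1 - \<gamma>) * k mu) \<partial>mu_dist N)" by (rule dec[OF fN aN km', symmetric])
  finally have le: "(\<integral>\<^sup>+mu. ennreal (h mu) \<partial>mu_dist N) \<le> (\<integral>\<^sup>+mu. ennreal ((1 - \<gamma>) * k mu) \<partial>mu_dist N)" .
  have kb2: "\<bar>(1 - \<gamma>) * k mu\<bar> \<le> B" for mu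
  proof -
    have "0 \<le> (1 - \<gamma>) * k mu" using g1 kb[of mu] by simp
    moreover have "(1 - \<gamma>) * k mu \<le> 1 * B" using g0 g1 kb[of mu] by (intro mult_mono) auto
    ultimately show ?thesis by simp
  qed
  have e1: "(\<integral>\<^sup>+mu. ennreal (h mu) \<partial>mu_dist N) = ennreal (integral\<^sup>L (mu_dist N) h)"
    using hb by (intro nn_eq_int[OF hm, of B]) auto
  have e2: "(\<integral>\<^sup>+mu. ennreal ((1 - \<gamma>) * k mu) \<partial>mu_dist N) = ennreal (integral\<^sup>L (mu_dist N) (\<lambda>mu. (1 - \<gamma>) * k mu))"
    using kb g1 by (intro nn_eq_int[OF km2, of B] kb2) auto
  have nn: "0 \<le> integral\<^sup>L (mu_dist N) (\<lambda>mu. (1 - \<gamma>) * k mu)" using kb g1 by (intro Bochner_Integration.integral_nonneg) auto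
  have "integral\<^sup>L (mu_dist N) h \<le> integral\<^sup>L (mu_dist N) (\<lambda>mu. (1 - \<gamma>) * k mu)"
    using le e1 e2 nn by (simp add: ennreal_le_iff)
  then show ?thesis by simp
qed


lemma int_I2:
  fixes m k :: "('a \<Rightarrow> real) \<Rightarrow> real"
  assumes fN: "finite N" and aN: "a \<in> N" and g0: "0 \<le> \<gamma>" and g1: "\<gamma> \<le> 1"
    and mm: "m \<in> borel_measurable (mu_dist N)" and km: "k \<in> borel_measurable (mu_dist N)"
    and mb: "\<And>mu. 0 \<le> m mu \<and> m mu \<le> B" and kb: "\<And>mu. 0 \<le> k mu \<and> k mu \<le> B"
    and kinv: "\<And>mu t. k (mu(a := t)) = k mu"
    and minv: "\<And>mu t. t \<le> \<gamma> \<Longrightarrow> m (mu(a := t)) = m (mu(a := 0))"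
    and km2: "\<And>mu. mu a \<le> \<gamma> \<Longrightarrow> k mu \<le> 2 * m mu"
  shows "\<gamma> * integral\<^sup>L (mu_dist N) k \<le> 2 * integral\<^sup>L (mu_dist N) m"
proof -
  let ?Q = "PiM (N - {a}) (\<lambda>_. UU)"
  have mm2: "(\<lambda>mu. 2 * m mu) \<in> borel_measurable (mu_dist N)" using mm by measurable
  have km2': "(\<lambda>mu. \<gamma> * k mu) \<in> borel_measurable (mu_dist N)" using km by measurable
  have mm': "(\<lambda>mu. ennreal (2 * m mu)) \<in> borel_measurable (mu_dist N)" using mm by measurable
  have km': "(\<lambda>mu. ennreal (\<gamma> * k mu)) \<in> borel_measurable (mu_dist N)" using km by measurable
  have "(\<integral>\<^sup>+mu. ennreal (\<gamma> * k mu) \<partial>mu_dist N) = (\<integral>\<^sup>+x. (\<integral>\<^sup>+t. ennreal (\<gamma> * k (x(a := t))) \<partial>UU) \<partial>?Q)"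
    by (rule dec[OF fN aN km'])
  also have "\<dots> \<le> (\<integral>\<^sup>+x. (\<integral>\<^sup>+t. ennreal (2 * m (x(a := t))) \<partial>UU) \<partial>?Q)"
  proof (rule nn_integral_mono)
    fix x :: "'a \<Rightarrow> real"
    have "(\<integral>\<^sup>+t. ennreal (\<gamma> * k (x(a := t))) \<partial>UU) = ennreal (\<gamma> * k x)"
      using UU_space by (simp add: kinv)
    also have "\<dots> \<le> ennreal (2 * m (x(a := 0))) * ennreal \<gamma>"
    proof -
      have "k x = k (x(a := 0))" using kinv[of x 0] by simp
      also have "\<dots> \<le> 2 * m (x(a := 0))" using km2[of "x(a := 0)"] g0 by simp
      finally have "\<gamma> * k x \<le> \<gamma> * (2 * m (x(a := 0)))" using g0 by (intro mult_left_mono) auto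
      then show ?thesis using g0 mb[of "x(a := 0)"] by (simp add: ennreal_mult[symmetric] mult.commute)
    qed
    also have "\<dots> = ennreal (2 * m (x(a := 0))) * emeasure UU {..\<gamma>}" using UU_le[OF g0 g1] by simp
    also have "\<dots> = (\<integral>\<^sup>+t. ennreal (2 * m (x(a := 0))) * indicator {..\<gamma>} t \<partial>UU)"
      by (rule nn_integral_cmult_indicator[symmetric]) simp
    also have "\<dots> \<le> (\<integral>\<^sup>+t. ennreal (2 * m (x(a := t))) \<partial>UU)"
      by (rule nn_integral_mono) (auto simp: indicator_def minv)
    finally show "(\<integral>\<^sup>+t. ennreal (\<gamma> * k (x(a := t))) \<partial>UU) \<le> (\<integral>\<^sup>+t. ennreal (2 * m (x(a := t))) \<partial>UU)" .
  qed
  also have "\<dots> = (\<integral>\<^sup>+mu. ennreal (2 * m mu) \<partial>mu_dist N)" by (rule dec[OF fN aN mm', symmetric])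
  finally have le: "(\<integral>\<^sup>+mu. ennreal (\<gamma> * k mu) \<partial>mu_dist N) \<le> (\<integral>\<^sup>+mu. ennreal (2 * m mu) \<partial>mu_dist N)" .
  have kb2: "\<bar>\<gamma> * k mu\<bar> \<le> B" for mu
  proof -
    have "0 \<le> \<gamma> * k mu" using g0 kb[of mu] by simp
    moreover have "\<gamma> * k mu \<le> 1 * B" using g0 g1 kb[of mu] by (intro mult_mono) auto
    ultimately show ?thesis by simp
  qed
  have e1: "(\<integral>\<^sup>+mu. ennreal (\<gamma> * k mu) \<partial>mu_dist N) = ennreal (integral\<^sup>L (mu_dist N) (\<lambda>mu. \<gamma> * k mu))"
    using kb g0 by (intro nn_eq_int[OF km2', of B] kb2) auto
  have e2: "(\<integral>\<^sup>+mu. ennreal (2 * m mu) \<partial>mu_dist N) = ennreal (integral\<^sup>L (mu_dist N) (\<lambda>mu. 2 * m mu))"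
    using mb by (intro nn_eq_int[OF mm2, of "2 * B"]) auto
  have nn: "0 \<le> integral\<^sup>L (mu_dist N) (\<lambda>mu. 2 * m mu)" using mb by (intro Bochner_Integration.integral_nonneg) auto
  have "integral\<^sup>L (mu_dist N) (\<lambda>mu. \<gamma> * k mu) \<le> integral\<^sup>L (mu_dist N) (\<lambda>mu. 2 * m mu)"
    using le e1 e2 nn by (simp add: ennreal_le_iff)
  then show ?thesis by simp
qed


lemma sum_Ei:
  fixes M :: "'i set" and N :: "'a set" and E :: "('i \<times> 'a) set" and x :: "'i \<times> 'a \<Rightarrow> real"
  assumes "finite M" "finite N" "E \<subseteq> M \<times> N"
  shows "(\<Sum>e\<in>{e \<in> E. snd e \<in> N \<and> cls (snd e) = i}. x e) = (\<Sum>a\<in>{a \<in> N. cls a = i}. \<Sum>itm\<in>{itm \<in> M. (itm, a) \<in> E}. x (itm, a))"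
proof -
  have Ei: "{e \<in> E. snd e \<in> N \<and> cls (snd e) = i} = prod.swap ` (SIGMA a:{a \<in> N. cls a = i}. {itm \<in> M. (itm, a) \<in> E})"
    using assms(3) by force
  show ?thesis unfolding Ei using assms(1,2)
    by (subst sum.reindex) (auto simp: sum.Sigma case_prod_beta prod.swap_def)
qed

lemma frac_bounds:
  fixes M :: "'i set" and N :: "'a set" and E :: "('i \<times> 'a) set"
  assumes fin: "finite M" "finite N" and EMN: "E \<subseteq> M \<times> N" and y0: "\<And>itm. 0 \<le> y itm"
  shows "0 \<le> frac_value M N E cls i y \<and> frac_value M N E cls i y \<le> real (card N)"
proof -
  let ?S = "{(\<Sum>e \<in> {e \<in> E. snd e \<in> N \<and> cls (snd e) = i}. x e) | x :: 'i \<times> 'a \<Rightarrow> real.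
            (\<forall>e. 0 \<le> x e) \<and>
            (\<forall>itm \<in> M. (\<Sum>a \<in> {a \<in> N. cls a = i \<and> (itm, a) \<in> E}. x (itm, a)) \<le> y itm) \<and>
            (\<forall>a \<in> N. cls a = i \<longrightarrow> (\<Sum>itm \<in> {itm \<in> M. (itm, a) \<in> E}. x (itm, a)) \<le> 1)}"
  have ub: "v \<le> real (card N)" if "v \<in> ?S" for v
  proof -
    from that obtain x where v: "v = (\<Sum>e \<in> {e \<in> E. snd e \<in> N \<and> cls (snd e) = i}. x e)"
      and xa: "\<forall>a \<in> N. cls a = i \<longrightarrow> (\<Sum>itm \<in> {itm \<in> M. (itm, a) \<in> E}. x (itm, a)) \<le> 1" by blast
    have "v = (\<Sum>a\<in>{a \<in> N. cls a = i}. \<Sum>itm\<in>{itm \<in> M. (itm, a) \<in> E}. x (itm, a))"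
      unfolding v by (rule sum_Ei[OF fin EMN])
    also have "\<dots> \<le> (\<Sum>a\<in>{a \<in> N. cls a = i}. 1)" using xa by (intro sum_mono) auto
    also have "\<dots> = real (card {a \<in> N. cls a = i})" by simp
    also have "\<dots> \<le> real (card N)" using fin by (intro of_nat_mono card_mono) auto
    finally show ?thesis .
  qed
  have z: "(\<Sum>e\<in>{e \<in> E. snd e \<in> N \<and> cls (snd e) = i}. (\<lambda>_. 0::real) e) \<in> ?S"
    using y0 by (intro CollectI exI[of _ "\<lambda>_. 0"]) auto
  then have ne: "?S \<noteq> {}" by blast
  have up: "frac_value M N E cls i y \<le> real (card N)"
    unfolding frac_value_def by (rule cSup_least[OF ne]) (rule ub)
  have "0 \<le> frac_value M N E cls i y"
    unfolding frac_value_def using z ub by (intro cSup_upper2[of 0]) (auto simp: bdd_above_def)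
  then show ?thesis using up by simp
qed

definition S0 :: "('i \<times> 'a) set \<times> 'i set \<times> 'i set" where "S0 = ({}, {}, {})"

lemma inv_S0: "hinv \<gamma> E N cls mu i {} S0"
  by (simp add: hinv_def S0_def matching_def)

lemma mart_S0:
  assumes "finite N" "distinct items"
  shows "measure_pmf.expectation (arun \<gamma> E N cls rk mu i S0 items) (\<lambda>S'. cT N cls j S' - class_value N cls i (fst S'))
     \<le> 0"
proof -
  note m = mart_run[OF inv_S0 assms(2) _ _ assms(1), where rk=rk and j=j]
  show ?thesis using m by (simp add: cT_def class_value_def S0_def)
qed

lemma hyb_arun: "hybrid_ranking \<gamma> E N cls rk mu items = map_pmf fst (arun \<gamma> E N cls rk mu i S0 items)"
  by (simp add: hybrid_xrun map_fst_arun S0_def)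

lemma exp_hyb:
  fixes f :: "('i \<times> 'a) set \<Rightarrow> real"
  shows "measure_pmf.expectation (hybrid_ranking \<gamma> E N cls rk mu items) f
       = measure_pmf.expectation (arun \<gamma> E N cls rk mu i S0 items) (\<lambda>S. f (fst S))"
  by (simp add: hyb_arun[of _ _ _ _ _ _ _ i])

lemma inv_support:
  assumes "finite N" "distinct items" "set items = M" "S \<in> set_pmf (arun \<gamma> E N cls rk mu i S0 items)"
  shows "hinv \<gamma> E N cls mu i M S"
  using inv_arun[OF inv_S0 assms(2) _ assms(4,1)] assms(3) by simp

lemma fin_arith: "(x::real) \<le> v + c + s \<Longrightarrow> c \<le> v \<Longrightarrow> v = w \<Longrightarrow> x \<le> 2 * w + s"
  by linarith

lemma per_mu:
  fixes M :: "'i set" and N :: "'a set" and E :: "('i \<times> 'a) set"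
  assumes fin: "finite M" "finite N" and EMN: "E \<subseteq> M \<times> N" and dis: "distinct items" and st: "set items = M"
  shows "measure_pmf.expectation (hybrid_ranking \<gamma> E N cls rk mu items) (\<lambda>X. frac_value M N E cls i (class_items N cls j X))
     \<le> 2 * measure_pmf.expectation (hybrid_ranking \<gamma> E N cls rk mu items) (class_value N cls i)
       + (\<Sum>a\<in>{a \<in> N. cls a = i}. measure_pmf.expectation (arun \<gamma> E N cls rk mu i S0 items)
            (\<lambda>S'. if Bd \<gamma> E N cls mu j a (fst S') (snd (snd S')) then 1 else 0))"
proof -
  let ?p = "arun \<gamma> E N cls rk mu i S0 items"
  let ?Ni = "{a \<in> N. cls a = i}"
  let ?B = "\<lambda>a S'. if Bd \<gamma> E N cls mu j a (fst S') (snd (snd S')) then 1 else 0 :: real"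
  let ?V = "\<lambda>S'. class_value N cls i (fst S')"
  have fp: "finite (set_pmf ?p)" by (rule finite_arun[OF fin(2)])
  have int: "integrable (measure_pmf ?p) f" for f :: "_ \<Rightarrow> real" by (rule integrable_measure_pmf_finite[OF fp])
  have pt: "frac_value M N E cls i (class_items N cls j (fst S')) \<le> ?V S' + cT N cls j S' + (\<Sum>a\<in>?Ni. ?B a S')"
    if S': "S' \<in> set_pmf ?p" for S'
  proof -
    obtain X T Q where S'eq: "S' = (X, T, Q)" by (cases S')
    have iv: "hinv \<gamma> E N cls mu i M (X, T, Q)" using inv_support[OF fin(2) dis st S'] S'eq by simp
    have "(\<Sum>a\<in>?Ni. ?B a S') = real (card {a \<in> ?Ni. Bd \<gamma> E N cls mu j a X Q})"
      using fin(2) by (simp add: sum_ind_card S'eq)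
    also have "{a \<in> ?Ni. Bd \<gamma> E N cls mu j a X Q} = {a \<in> N. cls a = i \<and> Bd \<gamma> E N cls mu j a X Q}" by auto
    finally show ?thesis using final_bound[OF iv fin EMN, of j] by (simp add: S'eq cT_def)
  qed
  have A0: "measure_pmf.expectation (hybrid_ranking \<gamma> E N cls rk mu items) (\<lambda>X. frac_value M N E cls i (class_items N cls j X))
      = measure_pmf.expectation ?p (\<lambda>S'. frac_value M N E cls i (class_items N cls j (fst S')))"
    by (rule exp_hyb)
  have A1: "measure_pmf.expectation ?p (\<lambda>S'. frac_value M N E cls i (class_items N cls j (fst S')))
      \<le> measure_pmf.expectation ?p (\<lambda>S'. ?V S' + cT N cls j S' + (\<Sum>a\<in>?Ni. ?B a S'))"
    by (rule exp_mono_fin[OF fp pt])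
  have A2: "measure_pmf.expectation ?p (\<lambda>S'. ?V S' + cT N cls j S' + (\<Sum>a\<in>?Ni. ?B a S'))
      = measure_pmf.expectation ?p ?V + measure_pmf.expectation ?p (cT N cls j)
        + (\<Sum>a\<in>?Ni. measure_pmf.expectation ?p (?B a))"
  proof -
    have "measure_pmf.expectation ?p (\<lambda>S'. ?V S' + cT N cls j S' + (\<Sum>a\<in>?Ni. ?B a S'))
       = measure_pmf.expectation ?p (\<lambda>S'. ?V S' + cT N cls j S') + measure_pmf.expectation ?p (\<lambda>S'. \<Sum>a\<in>?Ni. ?B a S')"
      by (rule Bochner_Integration.integral_add[OF int int])
    also have "measure_pmf.expectation ?p (\<lambda>S'. ?V S' + cT N cls j S') = measure_pmf.expectation ?p ?V + measure_pmf.expectation ?p (cT N cls j)"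
      by (rule Bochner_Integration.integral_add[OF int int])
    also have "measure_pmf.expectation ?p (\<lambda>S'. \<Sum>a\<in>?Ni. ?B a S') = (\<Sum>a\<in>?Ni. measure_pmf.expectation ?p (?B a))"
      by (rule Bochner_Integration.integral_sum[OF int])
    finally show ?thesis .
  qed
  have A3: "measure_pmf.expectation ?p (cT N cls j) \<le> measure_pmf.expectation ?p ?V"
  proof -
    have m: "measure_pmf.expectation ?p (\<lambda>S'. cT N cls j S' - ?V S') \<le> 0"
      by (rule mart_S0[OF fin(2) dis])
    have "measure_pmf.expectation ?p (\<lambda>S'. cT N cls j S' - ?V S')
        = measure_pmf.expectation ?p (cT N cls j) - measure_pmf.expectation ?p ?V"
      by (rule Bochner_Integration.integral_diff[OF int int])
    then show ?thesis using m by linarith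
  qed
  have A4: "measure_pmf.expectation ?p ?V = measure_pmf.expectation (hybrid_ranking \<gamma> E N cls rk mu items) (class_value N cls i)"
    by (rule exp_hyb[symmetric])
  have L: "measure_pmf.expectation (hybrid_ranking \<gamma> E N cls rk mu items) (\<lambda>X. frac_value M N E cls i (class_items N cls j X))
      \<le> measure_pmf.expectation ?p ?V + measure_pmf.expectation ?p (cT N cls j)
        + (\<Sum>a\<in>?Ni. measure_pmf.expectation ?p (?B a))"
    unfolding A0 A2[symmetric] by (rule A1)
  show ?thesis by (rule fin_arith[OF L A3 A4])
qed


lemma exp_cong_fin:
  fixes f g :: "'b \<Rightarrow> real"
  assumes "\<And>x. x \<in> set_pmf p \<Longrightarrow> f x = g x"
  shows "measure_pmf.expectation p f = measure_pmf.expectation p g"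
  using assms by (intro integral_cong_AE) (auto simp: AE_measure_pmf_iff)

theorem lemma4:
  fixes \<gamma> :: real and M :: "'i set" and N :: "'a set" and E :: "('i \<times> 'a) set"
    and k :: nat and cls :: "'a \<Rightarrow> nat" and rk :: "'a \<Rightarrow> nat" and items :: "'i list"
  assumes "0 \<le> \<gamma>" and "\<gamma> \<le> 1"
    and "finite M" and "finite N" and "E \<subseteq> M \<times> N"
    and "\<forall>a \<in> N. cls a < k"
    and "inj_on rk N"
    and "distinct items" and "set items = M"
    and "i < k" and "j < k"
  shows "hr_expect \<gamma> E N cls rk items (class_value N cls i)
           \<ge> \<gamma> / 2 * hr_expect \<gamma> E N cls rk items
                        (\<lambda>X. frac_value M N E cls i (class_items N cls j X))"
proof -
  note g0 = assms(1) and g1 = assms(2) and fM = assms(3) and fN = assms(4) and EMN = assms(5)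
    and inj = assms(7) and dis = assms(8) and st = assms(9)
  let ?Ni = "{a \<in> N. cls a = i}"
  define V where "V = (\<lambda>mu. measure_pmf.expectation (hybrid_ranking \<gamma> E N cls rk mu items) (class_value N cls i))"
  define Sv where "Sv = (\<lambda>mu. measure_pmf.expectation (hybrid_ranking \<gamma> E N cls rk mu items)
                          (\<lambda>X. frac_value M N E cls i (class_items N cls j X)))"
  define Bm where "Bm = (\<lambda>a mu. measure_pmf.expectation (arun \<gamma> E N cls rk mu i S0 items)
                          (\<lambda>S'. if Bd \<gamma> E N cls mu j a (fst S') (snd (snd S')) then 1 else 0 :: real))"
  define fm where "fm = (\<lambda>a mu. measure_pmf.expectation (arun \<gamma> E (N - {a}) cls rk mu i S0 items)
                          (\<lambda>S'. if psi E N cls j a S' then 1 else 0 :: real))"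
  define mm where "mm = (\<lambda>a mu. measure_pmf.expectation (xrun \<gamma> E N cls rk mu {} items)
                          (\<lambda>X'. if unmatched X' a then 0 else 1 :: real))"
  have fNa: "finite (N - {a})" for a using fN by simp
  have P1: "Sv mu \<le> 2 * V mu + (\<Sum>a\<in>?Ni. Bm a mu)" for mu
    unfolding Sv_def V_def Bm_def by (rule per_mu[OF fM fN EMN dis st])
  have P2: "V mu = (\<Sum>a\<in>?Ni. mm a mu)" for mu
  proof -
    let ?p = "arun \<gamma> E N cls rk mu i S0 items"
    have int: "integrable (measure_pmf ?p) f" for f :: "_ \<Rightarrow> real"
      by (rule integrable_measure_pmf_finite[OF finite_arun[OF fN]])
    have "V mu = measure_pmf.expectation ?p (\<lambda>S. class_value N cls i (fst S))"
      unfolding V_def by (rule exp_hyb)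
    also have "\<dots> = measure_pmf.expectation ?p (\<lambda>S. \<Sum>a\<in>?Ni. if unmatched (fst S) a then 0 else 1)"
    proof (rule exp_cong_fin)
      fix S assume S: "S \<in> set_pmf ?p"
      have iv: "hinv \<gamma> E N cls mu i M S" by (rule inv_support[OF fN dis st S])
      then have "class_value N cls i (fst S) = real (card {a \<in> N. cls a = i \<and> \<not> unmatched (fst S) a})"
        by (intro class_value_alt) (auto simp: hinv_def)
      also have "\<dots> = real (card {a \<in> ?Ni. \<not> unmatched (fst S) a})"
        by (rule arg_cong[where f="\<lambda>A. real (card A)"]) auto
      also have "\<dots> = (\<Sum>a\<in>?Ni. if \<not> unmatched (fst S) a then 1 else 0)"
        by (rule sum_ind_card[symmetric]) (use fN in simp)
      also have "\<dots> = (\<Sum>a\<in>?Ni. if unmatched (fst S) a then 0 else 1)"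
        by (intro sum.cong) auto
      finally show "class_value N cls i (fst S) = (\<Sum>a\<in>?Ni. if unmatched (fst S) a then 0 else 1)" .
    qed
    also have "\<dots> = (\<Sum>a\<in>?Ni. measure_pmf.expectation ?p (\<lambda>S. if unmatched (fst S) a then 0 else 1))"
      by (rule Bochner_Integration.integral_sum[OF int])
    also have "\<dots> = (\<Sum>a\<in>?Ni. mm a mu)"
    proof (rule sum.cong[OF refl])
      fix a
      have "xrun \<gamma> E N cls rk mu {} items = map_pmf fst ?p" by (simp add: map_fst_arun S0_def)
      then show "measure_pmf.expectation ?p (\<lambda>S. if unmatched (fst S) a then 0 else 1) = mm a mu"
        unfolding mm_def by simp
    qed
    finally show ?thesis .
  qed
  have P3: "Bm a mu \<le> (if mu a \<le> \<gamma> then 0 else fm a mu)" if a: "a \<in> ?Ni" "mu a \<notin> mu ` (N - {a})" for a mu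
  proof (cases "mu a \<le> \<gamma>")
    case True
    then show ?thesis unfolding Bm_def by (simp add: Bd_def)
  next
    case False
    have "Bm a mu \<le> fm a mu" unfolding Bm_def fm_def
      using a False fN by (intro K1_run) auto
    then show ?thesis using False by simp
  qed
  have P4: "fm a mu \<le> 2 * mm a mu" if a: "a \<in> ?Ni" "mu a \<le> \<gamma>" for a mu
  proof -
    have "fm a mu \<le> 2 * measure_pmf.expectation (xrun \<gamma> E N cls rk mu (fst S0) items) (\<lambda>X'. if unmatched X' a then 0 else 1)
           + (if psi E N cls j a S0 then 1 else 0)"
      unfolding fm_def using a by (intro K2_run[OF _ _ _ inj fN dis]) (auto simp: S0_def)
    then show ?thesis by (simp add: mm_def psi_def S0_def)
  qed
  have P5: "fm a (mu(a := t)) = fm a mu" for a mu t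
  proof -
    have r: "rel \<gamma> (N - {a}) (mu(a := t)) mu" unfolding rel_def by simp
    show ?thesis unfolding fm_def arun_rel[OF r] ..
  qed
  have P6: "mm a (mu(a := t)) = mm a (mu(a := 0))" if "t \<le> \<gamma>" for a mu t
  proof -
    have r1: "\<forall>b\<in>N. ((mu(a := t)) b \<le> \<gamma>) = ((mu(a := 0)) b \<le> \<gamma>)" using that g0 by simp
    have r2: "\<forall>b\<in>N. \<forall>c\<in>N. \<not> (mu(a := t)) b \<le> \<gamma> \<longrightarrow> \<not> (mu(a := t)) c \<le> \<gamma> \<longrightarrow>
       ((mu(a := t)) b \<le> (mu(a := t)) c) = ((mu(a := 0)) b \<le> (mu(a := 0)) c)" using that by simp
    have r: "rel \<gamma> N (mu(a := t)) (mu(a := 0))" unfolding rel_def using r1 r2 by blast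
    show ?thesis unfolding mm_def xrun_rel[OF r] ..
  qed
  have mV: "V \<in> borel_measurable (mu_dist N)"
  proof (unfold V_def hybrid_xrun, rule meas_rel[where \<gamma>=\<gamma>, OF fN])
    fix mu mu' assume r: "rel \<gamma> N mu mu'"
    show "measure_pmf.expectation (xrun \<gamma> E N cls rk mu {} items) (class_value N cls i) = measure_pmf.expectation (xrun \<gamma> E N cls rk mu' {} items) (class_value N cls i)" unfolding xrun_rel[OF r] ..
  qed
  have mS: "Sv \<in> borel_measurable (mu_dist N)"
  proof (unfold Sv_def hybrid_xrun, rule meas_rel[where \<gamma>=\<gamma>, OF fN])
    fix mu mu' assume r: "rel \<gamma> N mu mu'"
    show "measure_pmf.expectation (xrun \<gamma> E N cls rk mu {} items) (\<lambda>X. frac_value M N E cls i (class_items N cls j X)) = measure_pmf.expectation (xrun \<gamma> E N cls rk mu' {} items) (\<lambda>X. frac_value M N E cls i (class_items N cls j X))" unfolding xrun_rel[OF r] ..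
  qed
  have mB: "Bm a \<in> borel_measurable (mu_dist N)" if "a \<in> ?Ni" for a
  proof -
    have "Bm a mu = Bm a mu'" if r: "rel \<gamma> N mu mu'" for mu mu'
    proof -
      have "(mu a \<le> \<gamma>) = (mu' a \<le> \<gamma>)" using r \<open>a \<in> ?Ni\<close> by (auto simp: rel_def)
      then have e: "(\<lambda>S'. if Bd \<gamma> E N cls mu j a (fst S') (snd (snd S')) then 1 else 0 :: real)
          = (\<lambda>S'. if Bd \<gamma> E N cls mu' j a (fst S') (snd (snd S')) then 1 else 0 :: real)"
        by (simp add: Bd_def)
      show ?thesis unfolding Bm_def arun_rel[OF r] e ..
    qed
 then show ?thesis by (intro meas_rel[where \<gamma>=\<gamma>, OF fN])
  qed
  have mf: "fm a \<in> borel_measurable (mu_dist N)" for a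
  proof (unfold fm_def, rule meas_rel[where \<gamma>=\<gamma>, OF fN])
    fix mu mu' assume "rel \<gamma> N mu mu'"
    then have r: "rel \<gamma> (N - {a}) mu mu'" by (rule rel_mono) auto
    show "measure_pmf.expectation (arun \<gamma> E (N - {a}) cls rk mu i S0 items) (\<lambda>S'. if psi E N cls j a S' then 1 else 0)
       = measure_pmf.expectation (arun \<gamma> E (N - {a}) cls rk mu' i S0 items) (\<lambda>S'. if psi E N cls j a S' then 1 else 0)"
      unfolding arun_rel[OF r] ..
  qed
  have mm_m: "mm a \<in> borel_measurable (mu_dist N)" for a
  proof (unfold mm_def hybrid_xrun, rule meas_rel[where \<gamma>=\<gamma>, OF fN])
    fix mu mu' assume r: "rel \<gamma> N mu mu'"
    show "measure_pmf.expectation (xrun \<gamma> E N cls rk mu {} items) (\<lambda>X'. if unmatched X' a then 0 else 1) = measure_pmf.expectation (xrun \<gamma> E N cls rk mu' {} items) (\<lambda>X'. if unmatched X' a then 0 else 1)" unfolding xrun_rel[OF r] ..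
  qed
  have bB: "0 \<le> Bm a mu \<and> Bm a mu \<le> 1" for a mu
    unfolding Bm_def by (intro conjI exp_nonneg exp_le1 finite_arun[OF fN]) auto
  have bf: "0 \<le> fm a mu \<and> fm a mu \<le> 1" for a mu
    unfolding fm_def by (intro conjI exp_nonneg exp_le1 finite_arun[OF fNa]) auto
  have bm: "0 \<le> mm a mu \<and> mm a mu \<le> 1" for a mu
    unfolding mm_def by (intro conjI exp_nonneg exp_le1 finite_xrun[OF fN]) auto
  have bV: "0 \<le> V mu \<and> V mu \<le> real (card N)" for mu
  proof -
    have "V mu \<le> (\<Sum>a\<in>?Ni. 1)" unfolding P2 using bm by (intro sum_mono) auto
    also have "\<dots> \<le> real (card N)" using fN by (simp add: card_mono)
    finally show ?thesis unfolding P2 using bm by (simp add: sum_nonneg)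
  qed
  have bS: "0 \<le> Sv mu \<and> Sv mu \<le> real (card N)" for mu
  proof -
    have fb: "0 \<le> frac_value M N E cls i (class_items N cls j X) \<and> frac_value M N E cls i (class_items N cls j X) \<le> real (card N)" for X
      by (rule frac_bounds[OF fM fN EMN]) (simp add: class_items_def)
    have fh: "finite (set_pmf (hybrid_ranking \<gamma> E N cls rk mu items))"
      unfolding hybrid_xrun by (rule finite_xrun[OF fN])
    have "Sv mu \<le> 1 * real (card N)"
    proof -
      have "Sv mu \<le> measure_pmf.expectation (hybrid_ranking \<gamma> E N cls rk mu items) (\<lambda>_. real (card N))"
        unfolding Sv_def by (rule exp_mono_fin[OF fh]) (use fb in auto)
      then show ?thesis by simp
    qed
    moreover have "0 \<le> Sv mu" unfolding Sv_def using fb by (intro exp_nonneg) auto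
    ultimately show ?thesis by simp
  qed
  have iV: "integrable (mu_dist N) V" using bV by (intro integrable_bnd[OF mV, of "real (card N)"]) auto
  have iS: "integrable (mu_dist N) Sv" using bS by (intro integrable_bnd[OF mS, of "real (card N)"]) auto
  have iB: "integrable (mu_dist N) (Bm a)" if "a \<in> ?Ni" for a
    using bB by (intro integrable_bnd[OF mB[OF that], of 1]) auto
  have imm: "integrable (mu_dist N) (mm a)" for a
    using bm by (intro integrable_bnd[OF mm_m, where B=1]) auto
  let ?I = "integral\<^sup>L (mu_dist N)"
  have a1: "?I Sv \<le> 2 * ?I V + (\<Sum>a\<in>?Ni. ?I (Bm a))"
  proof -
    have "?I Sv \<le> ?I (\<lambda>mu. 2 * V mu + (\<Sum>a\<in>?Ni. Bm a mu))"
      using iS iV iB by (intro integral_mono P1 Bochner_Integration.integrable_add integrable_mult_right Bochner_Integration.integrable_sum) auto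
    also have "\<dots> = ?I (\<lambda>mu. 2 * V mu) + ?I (\<lambda>mu. \<Sum>a\<in>?Ni. Bm a mu)"
      using iV iB by (intro Bochner_Integration.integral_add) auto
    also have "?I (\<lambda>mu. \<Sum>a\<in>?Ni. Bm a mu) = (\<Sum>a\<in>?Ni. ?I (Bm a))"
      using iB by (intro Bochner_Integration.integral_sum) auto
    finally show ?thesis by simp
  qed
  have a2: "?I (Bm a) \<le> (1 - \<gamma>) * ?I (fm a)" if a: "a \<in> ?Ni" for a
  proof (rule int_I1[OF fN _ g0 g1 mB[OF a] mf])
    show "a \<in> N" using a by simp
    show "\<And>mu. 0 \<le> Bm a mu \<and> Bm a mu \<le> 1" by (rule bB)
    show "\<And>mu. 0 \<le> fm a mu \<and> fm a mu \<le> 1" by (rule bf)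
    show "\<And>mu t. fm a (mu(a := t)) = fm a mu" by (rule P5)
    show "\<And>mu. mu a \<notin> mu ` (N - {a}) \<Longrightarrow> Bm a mu \<le> (if mu a \<le> \<gamma> then 0 else fm a mu)" by (rule P3[OF a])
  qed
  have a3: "\<gamma> * ?I (fm a) \<le> 2 * ?I (mm a)" if a: "a \<in> ?Ni" for a
  proof (rule int_I2[OF fN _ g0 g1 mm_m mf])
    show "a \<in> N" using a by simp
    show "\<And>mu. 0 \<le> mm a mu \<and> mm a mu \<le> 1" by (rule bm)
    show "\<And>mu. 0 \<le> fm a mu \<and> fm a mu \<le> 1" by (rule bf)
    show "\<And>mu t. fm a (mu(a := t)) = fm a mu" by (rule P5)
    show "\<And>mu t. t \<le> \<gamma> \<Longrightarrow> mm a (mu(a := t)) = mm a (mu(a := 0))" by (rule P6)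
    show "\<And>mu. mu a \<le> \<gamma> \<Longrightarrow> fm a mu \<le> 2 * mm a mu" by (rule P4[OF a])
  qed
  have a4: "?I V = (\<Sum>a\<in>?Ni. ?I (mm a))"
  proof -
    have "?I V = ?I (\<lambda>mu. \<Sum>a\<in>?Ni. mm a mu)" by (rule arg_cong[where f="integral\<^sup>L (mu_dist N)"]) (rule ext, rule P2)
    also have "\<dots> = (\<Sum>a\<in>?Ni. ?I (mm a))" using imm by (intro Bochner_Integration.integral_sum) auto
    finally show ?thesis .
  qed
  have a5: "\<gamma> * ?I (Bm a) \<le> (1 - \<gamma>) * (2 * ?I (mm a))" if a: "a \<in> ?Ni" for a
  proof -
    have "\<gamma> * ?I (Bm a) \<le> \<gamma> * ((1 - \<gamma>) * ?I (fm a))" using a2[OF a] g0 by (rule mult_left_mono)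
    also have "\<dots> = (1 - \<gamma>) * (\<gamma> * ?I (fm a))" by simp
    also have "\<dots> \<le> (1 - \<gamma>) * (2 * ?I (mm a))" using a3[OF a] g1 by (intro mult_left_mono) auto
    finally show ?thesis .
  qed
  have "\<gamma> * ?I Sv \<le> \<gamma> * (2 * ?I V + (\<Sum>a\<in>?Ni. ?I (Bm a)))" using a1 g0 by (rule mult_left_mono)
  also have "\<dots> = 2 * \<gamma> * ?I V + (\<Sum>a\<in>?Ni. \<gamma> * ?I (Bm a))" by (simp add: algebra_simps sum_distrib_left)
  also have "\<dots> \<le> 2 * \<gamma> * ?I V + (\<Sum>a\<in>?Ni. (1 - \<gamma>) * (2 * ?I (mm a)))"
    using a5 by (intro add_left_mono sum_mono) auto
  also have "(\<Sum>a\<in>?Ni. (1 - \<gamma>) * (2 * ?I (mm a))) = (1 - \<gamma>) * (2 * ?I V)"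
    unfolding a4 by (simp add: sum_distrib_left)
  finally have "\<gamma> * ?I Sv \<le> 2 * ?I V" by (simp add: algebra_simps)
  then show ?thesis unfolding hr_expect_def V_def[symmetric] Sv_def[symmetric] by simp
qed

end
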